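(* Let $\lambda=(\lambda_1,\dots,\lambda_p)$ and $\mu=(\mu_1,\dots,\mu_q)$ be compositions of $n$ and let $\mathbf{k}=(k_1,\dots,k_p)$, $\mathbf{k}'=(k'_1,\dots,k'_q)$ be tuples of integers. Then, as representations of $T\rtimes S_n$, $$M(\lambda,\mathbf{k})\otimes M(\mu,\mathbf{k}')\cong\bigoplus_{B\in T(\lambda,\mu)}M(B,\mathbf{k}+\mathbf{k}'),$$ where $T(\lambda,\mu)$ is the set of $p\times q$ matrices $B=(b_{ij})$ of nonnegative integers whose $i$th row sums to $\lambda_i$ and $j$th column sums to $\mu_j$, and $M(B,\mathbf{k}+\mathbf{k}')$ is the weighted permutation module whose composition consists of the nonzero entries $b_{ij}$ of $B$, with the entry $b_{ij}$ assigned the weight $k_i+k'_j$.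
   Context: Let $T\subset GL_n(\mathbb{C})$ be the diagonal torus, $S_n$ the permutation matrices, and $T\rtimes S_n\cong\mathbb{C}^\times\wr S_n$ the monomial matrices; representations are complex algebraic. For a partition $\lambda$ of $r$ and integer $k$, $S^{\lambda,k}$ is the representation of $\mathbb{C}^\times\wr S_r$ on the Specht module $S^\lambda$ with each copy of $\mathbb{C}^\times$ acting by $z\mapsto z^k$. For a composition $\nu=(\nu_1,\dots,\nu_\ell)$ of $n$ (positive parts) and integers $\mathbf{w}=(w_1,\dots,w_\ell)$, the weighted permutation module is $$M(\nu,\mathbf{w}):=\mathrm{Ind}_{(\mathbb{C}^\times\wr S_{\nu_1})\times\dots\times(\mathbb{C}^\times\wr S_{\nu_\ell})}^{\mathbb{C}^\times\wr S_n}\left(S^{(\nu_1),w_1}\otimes\dots\otimes S^{(\nu_\ell),w_\ell}\right),$$ with block-diagonal product subgroup; its isomorphism class is unchanged by simultaneously permuting the parts and the weights. *)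

theory Defs
  imports Complex_Main "HOL-Combinatorics.Permutations"
begin

text \<open>Elements of the monomial group T \<rtimes> S_n = C^* wr S_n, as pairs (t, sigma):
  the monomial matrix diag(t) * P_sigma, where P_sigma e_j = e_(sigma j).\<close>

type_synonym wgrp = "(nat \<Rightarrow> complex) \<times> (nat \<Rightarrow> nat)"

definition wreath :: "nat \<Rightarrow> wgrp set" where
  "wreath n = {(t, \<sigma>). (\<forall>i<n. t i \<noteq> 0) \<and> (\<forall>i\<ge>n. t i = 1) \<and> \<sigma> permutes {..<n}}"

definition wmult :: "wgrp \<Rightarrow> wgrp \<Rightarrow> wgrp" where
  "wmult g h = (case g of (t, \<sigma>) \<Rightarrow> case h of (s, \<tau>) \<Rightarrow>
      ((\<lambda>i. t i * s (inv \<sigma> i)), \<sigma> \<circ> \<tau>))"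

definition block :: "nat list \<Rightarrow> nat \<Rightarrow> nat set" where
  "block \<nu> i = {sum_list (take i \<nu>) ..< sum_list (take (Suc i) \<nu>)}"

definition is_composition :: "nat list \<Rightarrow> nat \<Rightarrow> bool" where
  "is_composition \<nu> n \<longleftrightarrow> (\<forall>x\<in>set \<nu>. 0 < x) \<and> sum_list \<nu> = n"

definition young_sub :: "nat list \<Rightarrow> wgrp set" where
  "young_sub \<nu> = {(t, \<sigma>) \<in> wreath (sum_list \<nu>).
      \<forall>i<length \<nu>. \<sigma> ` block \<nu> i = block \<nu> i}"

text \<open>The one-dimensional representation S^{(nu_1),w_1} x ... x S^{(nu_l),w_l}:
  the Specht module of a one-row partition is trivial, and each copy of C^* in the
  i-th factor acts by z \<mapsto> z^(w_i).\<close>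

definition wchar :: "nat list \<Rightarrow> int list \<Rightarrow> wgrp \<Rightarrow> complex" where
  "wchar \<nu> w g = (\<Prod>i<length \<nu>. \<Prod>j\<in>block \<nu> i. (fst g j) powi (w ! i))"

text \<open>Induced representation Ind_H^G chi, realised as the space of functions
  phi : G \<rightarrow> C with phi(h g) = chi(h) phi(g) for h in H, with G acting by right
  translation.  (Functions are extended by 0 outside G.)\<close>

definition ind_space :: "nat \<Rightarrow> nat list \<Rightarrow> int list \<Rightarrow> (wgrp \<Rightarrow> complex) set" where
  "ind_space n \<nu> w = {\<phi>. (\<forall>g. g \<notin> wreath n \<longrightarrow> \<phi> g = 0) \<and>
      (\<forall>h\<in>young_sub \<nu>. \<forall>g\<in>wreath n. \<phi> (wmult h g) = wchar \<nu> w h * \<phi> g)}"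

definition ind_act :: "nat \<Rightarrow> wgrp \<Rightarrow> (wgrp \<Rightarrow> complex) \<Rightarrow> (wgrp \<Rightarrow> complex)" where
  "ind_act n g \<phi> = (\<lambda>x. if x \<in> wreath n then \<phi> (wmult x g) else 0)"

definition Mperm :: "nat list \<Rightarrow> int list \<Rightarrow> (wgrp \<Rightarrow> complex) set" where
  "Mperm \<nu> w = ind_space (sum_list \<nu>) \<nu> w"

definition tensor_space :: "('a \<Rightarrow> complex) set \<Rightarrow> ('b \<Rightarrow> complex) set \<Rightarrow> ('a \<times> 'b \<Rightarrow> complex) set" where
  "tensor_space V W = {\<Phi>. \<exists>(m::nat) (c::nat \<Rightarrow> complex) \<phi> \<psi>. (\<forall>i<m. \<phi> i \<in> V \<and> \<psi> i \<in> W) \<and>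
      \<Phi> = (\<lambda>(x, y). \<Sum>i<m. c i * \<phi> i x * \<psi> i y)}"

definition tensor_act :: "nat \<Rightarrow> wgrp \<Rightarrow> (wgrp \<times> wgrp \<Rightarrow> complex) \<Rightarrow> (wgrp \<times> wgrp \<Rightarrow> complex)" where
  "tensor_act n g \<Phi> = (\<lambda>(x, y). if x \<in> wreath n \<and> y \<in> wreath n
       then \<Phi> (wmult x g, wmult y g) else 0)"

definition Tmat :: "nat list \<Rightarrow> nat list \<Rightarrow> (nat \<Rightarrow> nat \<Rightarrow> nat) set" where
  "Tmat la mu = {B. (\<forall>i j. (length la \<le> i \<or> length mu \<le> j) \<longrightarrow> B i j = 0) \<and>
      (\<forall>i<length la. (\<Sum>j<length mu. B i j) = la ! i) \<and>
      (\<forall>j<length mu. (\<Sum>i<length la. B i j) = mu ! j)}"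

definition mat_comp :: "nat \<Rightarrow> nat \<Rightarrow> (nat \<Rightarrow> nat \<Rightarrow> nat) \<Rightarrow> nat list" where
  "mat_comp p q B = [B i j. i \<leftarrow> [0..<p], j \<leftarrow> [0..<q], B i j \<noteq> 0]"

definition mat_wts :: "nat \<Rightarrow> nat \<Rightarrow> (nat \<Rightarrow> nat \<Rightarrow> nat) \<Rightarrow> int list \<Rightarrow> int list \<Rightarrow> int list" where
  "mat_wts p q B k k' = [k ! i + k' ! j. i \<leftarrow> [0..<p], j \<leftarrow> [0..<q], B i j \<noteq> 0]"

definition dsum_space :: "nat list \<Rightarrow> nat list \<Rightarrow> int list \<Rightarrow> int list
      \<Rightarrow> ((nat \<Rightarrow> nat \<Rightarrow> nat) \<times> wgrp \<Rightarrow> complex) set" where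
  "dsum_space la mu k k' = {\<Phi>. (\<forall>B x. B \<notin> Tmat la mu \<longrightarrow> \<Phi> (B, x) = 0) \<and>
      (\<forall>B\<in>Tmat la mu. (\<lambda>x. \<Phi> (B, x)) \<in>
          Mperm (mat_comp (length la) (length mu) B) (mat_wts (length la) (length mu) B k k'))}"

definition dsum_act :: "nat \<Rightarrow> wgrp \<Rightarrow> ((nat \<Rightarrow> nat \<Rightarrow> nat) \<times> wgrp \<Rightarrow> complex)
      \<Rightarrow> ((nat \<Rightarrow> nat \<Rightarrow> nat) \<times> wgrp \<Rightarrow> complex)" where
  "dsum_act n g \<Phi> = (\<lambda>(B, x). ind_act n g (\<lambda>y. \<Phi> (B, y)) x)"

definition rep_iso :: "nat \<Rightarrow> ('a \<Rightarrow> complex) set \<Rightarrow> (wgrp \<Rightarrow> ('a \<Rightarrow> complex) \<Rightarrow> ('a \<Rightarrow> complex))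
     \<Rightarrow> ('b \<Rightarrow> complex) set \<Rightarrow> (wgrp \<Rightarrow> ('b \<Rightarrow> complex) \<Rightarrow> ('b \<Rightarrow> complex)) \<Rightarrow> bool" where
  "rep_iso n V \<rho> W \<rho>' \<longleftrightarrow> (\<exists>f. bij_betw f V W \<and>
      (\<forall>u\<in>V. \<forall>v\<in>V. \<forall>a b. f (\<lambda>x. a * u x + b * v x) = (\<lambda>y. a * f u y + b * f v y)) \<and>
      (\<forall>g\<in>wreath n. \<forall>v\<in>V. f (\<rho> g v) = \<rho>' g (f v)))"

end

theory Submission
  imports Defs
begin


definition lab :: "nat list \<Rightarrow> nat \<Rightarrow> nat" where
  "lab \<nu> x = card {r. r < length \<nu> \<and> sum_list (take (Suc r) \<nu>) \<le> x}"

lemma psum_Suc: "r < length \<nu> \<Longrightarrow> sum_list (take (Suc r) \<nu>) = sum_list (take r \<nu>) + \<nu> ! r"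
  by (simp add: take_Suc_conv_app_nth)

lemma psum_mono: "r \<le> r' \<Longrightarrow> sum_list (take r \<nu>) \<le> sum_list (take r' (\<nu>::nat list))"
proof (induction r' rule: dec_induct)
  case (step m)
  then show ?case
    by (cases "m < length \<nu>") (auto simp: psum_Suc)
qed simp

lemma psum_strict: assumes "\<forall>x\<in>set \<nu>. 0 < x" "r < r'" "r' \<le> length \<nu>"
  shows "sum_list (take r \<nu>) < sum_list (take r' (\<nu>::nat list))"
proof -
  have "sum_list (take r \<nu>) \<le> sum_list (take (r'-1) \<nu>)" using assms by (intro psum_mono) auto
  also have "\<dots> < sum_list (take (Suc (r'-1)) \<nu>)" using assms
    by (subst psum_Suc) (auto simp: nth_mem)
  finally show ?thesis using assms by simp
qed

lemma downclosed_eq: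
  assumes "finite S" "\<And>x y. x \<in> S \<Longrightarrow> y \<le> x \<Longrightarrow> y \<in> S"
  shows "S = {..<card S}"
proof -
  have "S \<subseteq> {..<card S}"
  proof
    fix x assume "x \<in> S"
    then have "{..x} \<subseteq> S" using assms(2) by auto
    then have "card {..x} \<le> card S" using assms(1) by (rule card_mono[rotated])
    then show "x \<in> {..<card S}" by simp
  qed
  then show ?thesis using assms(1) by (intro card_subset_eq) auto
qed

lemma lab_set:
  fixes \<nu> :: "nat list" and x :: nat
  defines "A \<equiv> {r. r < length \<nu> \<and> sum_list (take (Suc r) \<nu>) \<le> x}"
  shows "A = {..<lab \<nu> x}"
proof -
  have "A = {..<card A}"
  proof (rule downclosed_eq)
    show "finite A" unfolding A_def by auto
    fix a b assume "a \<in> A" "b \<le> a"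
    then show "b \<in> A" unfolding A_def using psum_mono[of "Suc b" "Suc a" \<nu>] by auto
  qed
  then show ?thesis unfolding lab_def A_def .
qed

lemma lab_lt:
  assumes "\<forall>x\<in>set \<nu>. 0 < x" "x < sum_list \<nu>"
  shows "lab \<nu> x < length \<nu>"
proof -
  have "lab \<nu> x \<le> length \<nu>" unfolding lab_def
    by (rule order.trans[OF card_mono[of "{..<length \<nu>}"]]) auto
  moreover have "lab \<nu> x \<noteq> length \<nu>"
  proof
    assume h: "lab \<nu> x = length \<nu>"
    then have "length \<nu> > 0" using assms by (cases \<nu>) auto
    then have "length \<nu> - 1 \<in> {..<lab \<nu> x}" using h by auto
    then have "sum_list (take (Suc (length \<nu> - 1)) \<nu>) \<le> x" using lab_set[of \<nu> x] by blast
    then show False using assms \<open>length \<nu> > 0\<close> by simp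
  qed
  ultimately show ?thesis by simp
qed

lemma block_lab:
  assumes pos: "\<forall>x\<in>set \<nu>. 0 < x" and i: "i < length \<nu>"
  shows "block \<nu> i = {x. x < sum_list \<nu> \<and> lab \<nu> x = i}"
proof (intro set_eqI iffI)
  fix x assume x: "x \<in> block \<nu> i"
  then have x1: "sum_list (take i \<nu>) \<le> x" "x < sum_list (take (Suc i) \<nu>)" by (auto simp: block_def)
  have "sum_list (take (Suc i) \<nu>) \<le> sum_list \<nu>" using psum_mono[of "Suc i" "length \<nu>" \<nu>] i by simp
  with x1 have "x < sum_list \<nu>" by simp
  moreover have "{r. r < length \<nu> \<and> sum_list (take (Suc r) \<nu>) \<le> x} = {..<i}"
  proof (intro set_eqI iffI)
    fix r assume "r \<in> {r. r < length \<nu> \<and> sum_list (take (Suc r) \<nu>) \<le> x}"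
    then have "r < length \<nu>" "sum_list (take (Suc r) \<nu>) \<le> x" by auto
    moreover have "\<not> i \<le> r"
    proof
      assume "i \<le> r"
      then have "sum_list (take (Suc i) \<nu>) \<le> sum_list (take (Suc r) \<nu>)" by (intro psum_mono) simp
      then show False using x1 \<open>sum_list (take (Suc r) \<nu>) \<le> x\<close> by linarith
    qed
    ultimately show "r \<in> {..<i}" by simp
  next
    fix r assume "r \<in> {..<i}"
    then show "r \<in> {r. r < length \<nu> \<and> sum_list (take (Suc r) \<nu>) \<le> x}"
      using i x1 psum_mono[of "Suc r" i \<nu>] by auto
  qed
  ultimately show "x \<in> {x. x < sum_list \<nu> \<and> lab \<nu> x = i}" by (simp add: lab_def)
next
  fix x assume "x \<in> {x. x < sum_list \<nu> \<and> lab \<nu> x = i}"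
  then have x: "x < sum_list \<nu>" "lab \<nu> x = i" by auto
  have "i \<notin> {..<lab \<nu> x}" using x by simp
  then have "\<not> sum_list (take (Suc i) \<nu>) \<le> x" using lab_set[of \<nu> x] i by blast
  moreover have "sum_list (take i \<nu>) \<le> x"
  proof (cases i)
    case 0 then show ?thesis by simp
  next
    case (Suc j)
    then have "j \<in> {..<lab \<nu> x}" using x by simp
    then show ?thesis using lab_set[of \<nu> x] Suc by blast
  qed
  ultimately show "x \<in> block \<nu> i" by (auto simp: block_def)
qed

lemma lab_mono: "x \<le> y \<Longrightarrow> lab \<nu> x \<le> lab \<nu> y"
  unfolding lab_def by (rule card_mono) auto

lemma card_lab:
  assumes pos: "\<forall>x\<in>set \<nu>. 0 < x" and i: "i < length \<nu>"
  shows "card {x. x < sum_list \<nu> \<and> lab \<nu> x = i} = \<nu> ! i"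
proof -
  have "card (block \<nu> i) = \<nu> ! i" by (simp add: block_def psum_Suc[OF i])
  then show ?thesis using block_lab[OF assms] by simp
qed

lemma card_lab_lessThan:
  assumes pos: "\<forall>x\<in>set \<nu>. 0 < x" and i: "i < length \<nu>"
  shows "card {x\<in>{..<sum_list \<nu>}. lab \<nu> x = i} = \<nu> ! i"
proof -
  have "{x\<in>{..<sum_list \<nu>}. lab \<nu> x = i} = {x. x < sum_list \<nu> \<and> lab \<nu> x = i}" by auto
  then show ?thesis using card_lab[OF assms] by simp
qed


lemma card_le_sum:
  fixes f :: "nat \<Rightarrow> nat"
  shows "card {i. i < n \<and> f i \<le> a} = (\<Sum>a'\<in>{..a}. card {i. i < n \<and> f i = a'})"
proof -
  have "{i. i < n \<and> f i \<le> a} = (\<Union>a'\<in>{..a}. {i. i < n \<and> f i = a'})" by auto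
  then show ?thesis by (simp only:) (rule card_UN_disjoint, auto)
qed

lemma mono_fiber_eq:
  fixes f g :: "nat \<Rightarrow> nat"
  assumes mf: "\<And>i j. i \<le> j \<Longrightarrow> j < n \<Longrightarrow> f i \<le> f j"
    and mg: "\<And>i j. i \<le> j \<Longrightarrow> j < n \<Longrightarrow> g i \<le> g j"
    and fib: "\<And>a. card {i. i < n \<and> f i = a} = card {i. i < n \<and> g i = a}"
    and i: "i < n"
  shows "f i = g i"
proof -
  have key: "f i \<le> a \<longleftrightarrow> g i \<le> a" for a
  proof -
    have ce: "card {i. i < n \<and> f i \<le> a} = card {i. i < n \<and> g i \<le> a}"
      by (simp add: card_le_sum fib)
    have df: "{i. i < n \<and> f i \<le> a} = {..<card {i. i < n \<and> f i \<le> a}}"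
      by (rule downclosed_eq) (auto intro: order.trans[OF mf])
    have dg: "{i. i < n \<and> g i \<le> a} = {..<card {i. i < n \<and> g i \<le> a}}"
      by (rule downclosed_eq) (auto intro: order.trans[OF mg])
    have "f i \<le> a \<longleftrightarrow> i \<in> {i. i < n \<and> f i \<le> a}" using i by simp
    also have "\<dots> \<longleftrightarrow> i \<in> {i. i < n \<and> g i \<le> a}" by (subst df, subst dg, simp add: ce)
    also have "\<dots> \<longleftrightarrow> g i \<le> a" using i by simp
    finally show ?thesis .
  qed
  from key[of "f i"] key[of "g i"] show ?thesis by simp
qed

lemma count_map_upt: "count (mset (map l [0..<n])) v = card {i. i < n \<and> l i = v}"
  unfolding count_mset count_list_eq_length_filter length_filter_conv_card by (intro arg_cong[where f=card]) auto

lemma perm_labels: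
  fixes l1 l2 :: "nat \<Rightarrow> 'x"
  assumes "\<And>v. card {i. i < n \<and> l1 i = v} = card {i. i < n \<and> l2 i = v}"
  obtains \<alpha> where "\<alpha> permutes {..<n}" "\<And>i. i < n \<Longrightarrow> l2 (\<alpha> i) = l1 i"
proof -
  have "mset (map l1 [0..<n]) = mset (map l2 [0..<n])"
    by (rule multiset_eqI) (simp only: count_map_upt assms)
  then obtain p where p: "p permutes {..<length (map l2 [0..<n])}"
    "permute_list p (map l2 [0..<n]) = map l1 [0..<n]"
    by (rule mset_eq_permutation)
  have pn: "p permutes {..<n}" using p(1) by simp
  have "l2 (p i) = l1 i" if "i < n" for i
  proof -
    have "permute_list p (map l2 [0..<n]) ! i = map l1 [0..<n] ! i" using p(2) by simp
    moreover have "p i < n" using permutes_in_image[OF pn] that by simp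
    ultimately show ?thesis using that by (simp add: permute_list_def)
  qed
  then show ?thesis using that pn by blast
qed

definition chi :: "nat list \<Rightarrow> int list \<Rightarrow> (nat \<Rightarrow> complex) \<Rightarrow> complex" where
  "chi \<nu> w t = (\<Prod>j<sum_list \<nu>. t j powi (w ! lab \<nu> j))"

definition pos :: "nat list \<Rightarrow> bool" where "pos \<nu> \<longleftrightarrow> (\<forall>x\<in>set \<nu>. 0 < x)"

lemma wchar_chi:
  assumes "pos \<nu>"
  shows "wchar \<nu> w g = chi \<nu> w (fst g)"
proof -
  have p: "\<forall>x\<in>set \<nu>. 0 < x" using assms by (simp add: pos_def)
  have "wchar \<nu> w g = (\<Prod>i<length \<nu>. \<Prod>j\<in>{x. x \<in> {..<sum_list \<nu>} \<and> lab \<nu> x = i}. fst g j powi (w ! lab \<nu> j))"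
    unfolding wchar_def
    by (intro prod.cong refl) (auto simp: block_lab[OF p])
  also have "\<dots> = chi \<nu> w (fst g)" unfolding chi_def
    by (rule prod.group) (auto simp: lab_lt[OF p])
  finally show ?thesis .
qed

definition lp :: "nat list \<Rightarrow> (nat \<Rightarrow> nat) \<Rightarrow> bool" where
  "lp \<nu> \<pi> \<longleftrightarrow> (\<forall>x. lab \<nu> (\<pi> x) = lab \<nu> x)"

lemma young_sub_iff:
  assumes "pos \<nu>"
  shows "(t, \<sigma>) \<in> young_sub \<nu> \<longleftrightarrow> (t, \<sigma>) \<in> wreath (sum_list \<nu>) \<and> lp \<nu> \<sigma>"
proof -
  have p: "\<forall>x\<in>set \<nu>. 0 < x" using assms by (simp add: pos_def)
  show ?thesis
  proof
    assume h: "(t, \<sigma>) \<in> young_sub \<nu>"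
    then have w: "(t, \<sigma>) \<in> wreath (sum_list \<nu>)" and bl: "\<forall>i<length \<nu>. \<sigma> ` block \<nu> i = block \<nu> i"
      by (auto simp: young_sub_def)
    have perm: "\<sigma> permutes {..<sum_list \<nu>}" using w by (simp add: wreath_def)
    have "lab \<nu> (\<sigma> x) = lab \<nu> x" for x
    proof (cases "x < sum_list \<nu>")
      case True
      let ?i = "lab \<nu> x"
      have i: "?i < length \<nu>" using lab_lt[OF p True] .
      have "x \<in> block \<nu> ?i" using True by (simp add: block_lab[OF p i])
      then have "\<sigma> x \<in> block \<nu> ?i" using bl i by blast
      then show ?thesis by (simp add: block_lab[OF p i])
    next
      case False
      then have "\<sigma> x = x" using permutes_not_in[OF perm] by simp
      then show ?thesis by simp
    qed
    then show "(t, \<sigma>) \<in> wreath (sum_list \<nu>) \<and> lp \<nu> \<sigma>" using w by (simp add: lp_def)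
  next
    assume h: "(t, \<sigma>) \<in> wreath (sum_list \<nu>) \<and> lp \<nu> \<sigma>"
    then have perm: "\<sigma> permutes {..<sum_list \<nu>}" and l: "\<And>x. lab \<nu> (\<sigma> x) = lab \<nu> x"
      by (auto simp: wreath_def lp_def)
    have "\<sigma> ` block \<nu> i = block \<nu> i" if i: "i < length \<nu>" for i
    proof (intro set_eqI iffI)
      fix y assume "y \<in> \<sigma> ` block \<nu> i"
      then obtain x where "x \<in> block \<nu> i" "y = \<sigma> x" by auto
      then have "x < sum_list \<nu>" "lab \<nu> x = i" by (auto simp: block_lab[OF p i])
      moreover have "\<sigma> x < sum_list \<nu>" using permutes_in_image[OF perm, of x] \<open>x < sum_list \<nu>\<close> by simp
      ultimately show "y \<in> block \<nu> i" using \<open>y = \<sigma> x\<close> l[of x] by (simp add: block_lab[OF p i])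
    next
      fix y assume y: "y \<in> block \<nu> i"
      have "y = \<sigma> (inv \<sigma> y)" using permutes_inverses(1)[OF perm] by simp
      moreover have "inv \<sigma> y \<in> block \<nu> i"
      proof -
        have "y < sum_list \<nu>" "lab \<nu> y = i" using y by (auto simp: block_lab[OF p i])
        moreover have "inv \<sigma> y < sum_list \<nu>"
          using permutes_in_image[OF permutes_inv[OF perm], of y] \<open>y < sum_list \<nu>\<close> by simp
        moreover have "lab \<nu> (inv \<sigma> y) = lab \<nu> y"
          using l[of "inv \<sigma> y"] \<open>y = \<sigma> (inv \<sigma> y)\<close> by simp
        ultimately show ?thesis by (simp add: block_lab[OF p i])
      qed
      ultimately show "y \<in> \<sigma> ` block \<nu> i" by blast
    qed
    then show "(t, \<sigma>) \<in> young_sub \<nu>" using h by (simp add: young_sub_def)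
  qed
qed


abbreviation one_t :: "nat \<Rightarrow> complex" where "one_t \<equiv> (\<lambda>_. 1)"
abbreviation P :: "(nat \<Rightarrow> nat) \<Rightarrow> wgrp" where "P \<sigma> \<equiv> (one_t, \<sigma>)"

lemma wmult_simp: "wmult (t, \<sigma>) (s, \<tau>) = (\<lambda>i. t i * s (inv \<sigma> i), \<sigma> \<circ> \<tau>)"
  by (simp add: wmult_def)

lemma wreath_iff: "(t, \<sigma>) \<in> wreath n \<longleftrightarrow> (\<forall>i<n. t i \<noteq> 0) \<and> (\<forall>i\<ge>n. t i = 1) \<and> \<sigma> permutes {..<n}"
  by (simp add: wreath_def)

lemma wmult_closed:
  assumes "x \<in> wreath n" "g \<in> wreath n"
  shows "wmult x g \<in> wreath n"
proof -
  obtain t \<sigma> s \<tau> where x: "x = (t, \<sigma>)" and g: "g = (s, \<tau>)" by fastforce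
  have p: "\<sigma> permutes {..<n}" "\<tau> permutes {..<n}" using assms x g by (auto simp: wreath_iff)
  have "inv \<sigma> i < n" if "i < n" for i using permutes_in_image[OF permutes_inv[OF p(1)], of i] that by simp
  moreover have "inv \<sigma> i = i" if "\<not> i < n" for i using permutes_not_in[OF permutes_inv[OF p(1)], of i] that by simp
  ultimately show ?thesis using assms p unfolding x g wmult_simp wreath_iff
    by (auto intro: permutes_compose)
qed

lemma P_in: "\<sigma> permutes {..<n} \<Longrightarrow> P \<sigma> \<in> wreath n"
  by (simp add: wreath_iff)

lemma inv_comp_bij: "bij \<sigma> \<Longrightarrow> bij \<tau> \<Longrightarrow> inv (\<sigma> \<circ> \<tau>) = inv \<tau> \<circ> inv \<sigma>"
  by (simp add: o_inv_distrib)

lemma wmult_assoc: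
  assumes "bij \<sigma>" "bij \<tau>"
  shows "wmult (wmult (t, \<sigma>) (s, \<tau>)) (r, \<rho>) = wmult (t, \<sigma>) (wmult (s, \<tau>) (r, \<rho>))"
  using assms by (simp add: wmult_simp o_inv_distrib mult.assoc comp_assoc)

lemma torus_in: "(t, \<sigma>) \<in> wreath n \<Longrightarrow> (t, id) \<in> wreath n"
  by (simp add: wreath_iff permutes_id)

lemma wmult_torus_P: "wmult (t, id) (P \<sigma>) = (t, \<sigma>)"
  by (simp add: wmult_simp)

lemma wmult_P_P: "wmult (P \<kappa>) (P \<sigma>) = P (\<kappa> \<circ> \<sigma>)"
  by (simp add: wmult_simp)

lemma chi_one: "chi \<nu> w one_t = 1"
  by (simp add: chi_def)

lemma chi_mult: "chi \<nu> w (\<lambda>i. t i * s i) = chi \<nu> w t * chi \<nu> w s"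
  by (simp add: chi_def power_int_mult_distrib prod.distrib)

lemma chi_reindex:
  assumes "\<kappa> permutes {..<sum_list \<nu>}" "lp \<nu> \<kappa>"
  shows "chi \<nu> w (\<lambda>i. t (inv \<kappa> i)) = chi \<nu> w t"
proof -
  have b: "bij_betw \<kappa> {..<sum_list \<nu>} {..<sum_list \<nu>}" using assms(1) by (rule permutes_imp_bij)
  have "chi \<nu> w (\<lambda>i. t (inv \<kappa> i)) = (\<Prod>j<sum_list \<nu>. t (inv \<kappa> (\<kappa> j)) powi (w ! lab \<nu> (\<kappa> j)))"
    unfolding chi_def by (rule prod.reindex_bij_betw[OF b, symmetric])
  also have "\<dots> = chi \<nu> w t" unfolding chi_def
    using assms by (simp add: permutes_inverses(2) lp_def)
  finally show ?thesis .
qed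

lemma lp_comp: "lp \<nu> \<kappa> \<Longrightarrow> lp \<nu> \<sigma> \<Longrightarrow> lp \<nu> (\<kappa> \<circ> \<sigma>)"
  by (simp add: lp_def)

lemma lp_inv: "bij \<kappa> \<Longrightarrow> lp \<nu> \<kappa> \<Longrightarrow> lp \<nu> (inv \<kappa>)"
  unfolding lp_def by (metis bij_inv_eq_iff)

lemma lp_id: "lp \<nu> id"
  by (simp add: lp_def)

lemma ind_red:
  assumes "\<phi> \<in> ind_space n \<nu> w" "sum_list \<nu> = n" "pos \<nu>" "(t, \<sigma>) \<in> wreath n"
  shows "\<phi> (t, \<sigma>) = chi \<nu> w t * \<phi> (P \<sigma>)"
proof -
  have h: "(t, id) \<in> young_sub \<nu>" using assms by (simp add: young_sub_iff torus_in lp_id)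
  have "P \<sigma> \<in> wreath n" using assms by (simp add: wreath_iff)
  then have "\<phi> (wmult (t, id) (P \<sigma>)) = wchar \<nu> w (t, id) * \<phi> (P \<sigma>)"
    using assms(1) h by (simp add: ind_space_def)
  then show ?thesis by (simp add: wmult_torus_P wchar_chi[OF assms(3)])
qed

lemma ind_inv:
  assumes "\<phi> \<in> ind_space n \<nu> w" "sum_list \<nu> = n" "pos \<nu>" "\<kappa> permutes {..<n}" "lp \<nu> \<kappa>"
    "\<sigma> permutes {..<n}"
  shows "\<phi> (P (\<kappa> \<circ> \<sigma>)) = \<phi> (P \<sigma>)"
proof -
  have h: "P \<kappa> \<in> young_sub \<nu>" using assms by (simp add: young_sub_iff P_in)
  have "P \<sigma> \<in> wreath n" using assms by (simp add: wreath_iff)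
  then have "\<phi> (wmult (P \<kappa>) (P \<sigma>)) = wchar \<nu> w (P \<kappa>) * \<phi> (P \<sigma>)"
    using assms(1) h by (simp add: ind_space_def)
  then show ?thesis by (simp add: wmult_P_P wchar_chi[OF assms(3)] chi_one)
qed

lemma ind_mem:
  assumes "sum_list \<nu> = n" "pos \<nu>"
    and F: "\<And>\<kappa> \<sigma>. \<kappa> permutes {..<n} \<Longrightarrow> lp \<nu> \<kappa> \<Longrightarrow> \<sigma> permutes {..<n} \<Longrightarrow> F (\<kappa> \<circ> \<sigma>) = F \<sigma>"
  shows "(\<lambda>x. if x \<in> wreath n then chi \<nu> w (fst x) * F (snd x) else 0) \<in> ind_space n \<nu> w"
  unfolding ind_space_def mem_Collect_eq
  apply (intro conjI allI impI ballI)
   apply simp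
  subgoal for h g
  proof -
    assume h: "h \<in> young_sub \<nu>" and g: "g \<in> wreath n"
    obtain s \<kappa> t \<sigma> where hh: "h = (s, \<kappa>)" and gg: "g = (t, \<sigma>)" by fastforce
    have hw: "h \<in> wreath n" and lk: "lp \<nu> \<kappa>" using h assms unfolding hh by (auto simp: young_sub_iff)
    have pk: "\<kappa> permutes {..<n}" and ps: "\<sigma> permutes {..<n}" using hw g hh gg by (auto simp: wreath_iff)
    have "wmult h g \<in> wreath n" using hw g by (rule wmult_closed)
    moreover have "chi \<nu> w (\<lambda>i. s i * t (inv \<kappa> i)) = chi \<nu> w s * chi \<nu> w t"
      using chi_reindex[of \<kappa> \<nu> w t] pk lk assms(1) by (simp add: chi_mult)
    ultimately show ?thesis
      using g F[OF pk lk ps] unfolding hh gg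
      by (simp add: wmult_simp wchar_chi[OF assms(2)])
  qed
  done


definition TS :: "nat \<Rightarrow> nat list \<Rightarrow> nat list \<Rightarrow> int list \<Rightarrow> int list \<Rightarrow> (wgrp \<times> wgrp \<Rightarrow> complex) set" where
  "TS n la mu k k' = {\<Phi>. (\<forall>x y. (x \<notin> wreath n \<or> y \<notin> wreath n) \<longrightarrow> \<Phi> (x, y) = 0) \<and>
     (\<forall>x\<in>wreath n. \<forall>y\<in>wreath n. \<Phi> (x, y) = chi la k (fst x) * chi mu k' (fst y) * \<Phi> (P (snd x), P (snd y))) \<and>
     (\<forall>\<kappa> \<kappa>' \<sigma> \<sigma>'. \<kappa> permutes {..<n} \<and> lp la \<kappa> \<and> \<kappa>' permutes {..<n} \<and> lp mu \<kappa>' \<and>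
        \<sigma> permutes {..<n} \<and> \<sigma>' permutes {..<n} \<longrightarrow> \<Phi> (P (\<kappa> \<circ> \<sigma>), P (\<kappa>' \<circ> \<sigma>')) = \<Phi> (P \<sigma>, P \<sigma>'))}"

lemma ind_zero: "\<phi> \<in> ind_space n \<nu> w \<Longrightarrow> x \<notin> wreath n \<Longrightarrow> \<phi> x = 0"
  unfolding ind_space_def by blast

lemma tensor_sub_TS:
  assumes "sum_list la = n" "pos la" "sum_list mu = n" "pos mu"
  shows "tensor_space (ind_space n la k) (ind_space n mu k') \<subseteq> TS n la mu k k'"
proof
  fix \<Phi> assume "\<Phi> \<in> tensor_space (ind_space n la k) (ind_space n mu k')"
  then have "\<exists>m c \<phi> \<psi>. (\<forall>i<(m::nat). \<phi> i \<in> ind_space n la k \<and> \<psi> i \<in> ind_space n mu k') \<and>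
     \<Phi> = (\<lambda>(x, y). \<Sum>i<m. (c::nat\<Rightarrow>complex) i * \<phi> i x * \<psi> i y)"
    unfolding tensor_space_def by simp
  then obtain m c \<phi> \<psi> where mem: "\<forall>i<(m::nat). \<phi> i \<in> ind_space n la k \<and> \<psi> i \<in> ind_space n mu k'"
    and \<Phi>: "\<Phi> = (\<lambda>(x, y). \<Sum>i<m. (c::nat\<Rightarrow>complex) i * \<phi> i x * \<psi> i y)"
    by blast
  have z: "\<Phi> (x, y) = 0" if "x \<notin> wreath n \<or> y \<notin> wreath n" for x y
    unfolding \<Phi> using mem that by (auto simp: ind_zero intro!: sum.neutral)
  have r: "\<Phi> (x, y) = chi la k (fst x) * chi mu k' (fst y) * \<Phi> (P (snd x), P (snd y))"
    if "x \<in> wreath n" "y \<in> wreath n" for x y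
  proof -
    obtain t \<sigma> t' \<sigma>' where xy: "x = (t, \<sigma>)" "y = (t', \<sigma>')" by fastforce
    have "\<Phi> (x, y) = (\<Sum>i<m. chi la k t * chi mu k' t' * (c i * \<phi> i (P \<sigma>) * \<psi> i (P \<sigma>')))"
      unfolding \<Phi> xy using mem that xy
      by (auto intro!: sum.cong simp: ind_red[OF _ assms(1,2)] ind_red[OF _ assms(3,4)])
    also have "\<dots> = chi la k t * chi mu k' t' * \<Phi> (P \<sigma>, P \<sigma>')"
      unfolding \<Phi> by (simp add: sum_distrib_left)
    finally show ?thesis using xy by simp
  qed
  have i: "\<Phi> (P (\<kappa> \<circ> \<sigma>), P (\<kappa>' \<circ> \<sigma>')) = \<Phi> (P \<sigma>, P \<sigma>')"
    if "\<kappa> permutes {..<n}" "lp la \<kappa>" "\<kappa>' permutes {..<n}" "lp mu \<kappa>'" "\<sigma> permutes {..<n}" "\<sigma>' permutes {..<n}"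
    for \<kappa> \<kappa>' \<sigma> \<sigma>'
    unfolding \<Phi> using mem that
    by (auto intro!: sum.cong simp: ind_inv[OF _ assms(1,2)] ind_inv[OF _ assms(3,4)])
  show "\<Phi> \<in> TS n la mu k k'" unfolding TS_def using z r i by blast
qed

definition rel :: "nat list \<Rightarrow> (nat \<Rightarrow> nat) \<Rightarrow> (nat \<Rightarrow> nat) \<Rightarrow> bool" where
  "rel \<nu> \<sigma> \<alpha> \<longleftrightarrow> (\<forall>z. lab \<nu> (\<sigma> z) = lab \<nu> (\<alpha> z))"

definition ee :: "nat \<Rightarrow> nat list \<Rightarrow> int list \<Rightarrow> (nat \<Rightarrow> nat) \<Rightarrow> wgrp \<Rightarrow> complex" where
  "ee n \<nu> w \<alpha> = (\<lambda>x. if x \<in> wreath n then chi \<nu> w (fst x) * (if rel \<nu> (snd x) \<alpha> then 1 else 0) else 0)"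

lemma ee_mem: "sum_list \<nu> = n \<Longrightarrow> pos \<nu> \<Longrightarrow> ee n \<nu> w \<alpha> \<in> ind_space n \<nu> w"
  unfolding ee_def by (rule ind_mem) (auto simp: rel_def lp_def)

definition NN :: "nat \<Rightarrow> nat list \<Rightarrow> (nat \<Rightarrow> nat) \<Rightarrow> nat" where
  "NN n \<nu> \<sigma> = card {\<alpha>. \<alpha> permutes {..<n} \<and> rel \<nu> \<sigma> \<alpha>}"

lemma rel_to_lp:
  assumes "\<sigma> permutes {..<n}" "\<alpha> permutes {..<n}" "rel \<nu> \<sigma> \<alpha>"
  shows "\<alpha> \<circ> inv \<sigma> permutes {..<n}" "lp \<nu> (\<alpha> \<circ> inv \<sigma>)" "(\<alpha> \<circ> inv \<sigma>) \<circ> \<sigma> = \<alpha>"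
proof -
  show "\<alpha> \<circ> inv \<sigma> permutes {..<n}" using assms by (intro permutes_compose permutes_inv)
  show "lp \<nu> (\<alpha> \<circ> inv \<sigma>)" unfolding lp_def
  proof
    fix z
    have "lab \<nu> (\<alpha> (inv \<sigma> z)) = lab \<nu> (\<sigma> (inv \<sigma> z))" using assms(3) by (simp add: rel_def)
    also have "\<dots> = lab \<nu> z" using permutes_inverses(1)[OF assms(1)] by simp
    finally show "lab \<nu> ((\<alpha> \<circ> inv \<sigma>) z) = lab \<nu> z" by simp
  qed
  show "(\<alpha> \<circ> inv \<sigma>) \<circ> \<sigma> = \<alpha>" using permutes_inverses(2)[OF assms(1)] by (auto simp: fun_eq_iff)
qed

lemma NN_eq: "rel \<nu> \<sigma> \<alpha> \<Longrightarrow> NN n \<nu> \<alpha> = NN n \<nu> \<sigma>"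
  unfolding NN_def rel_def by (rule arg_cong[where f=card]) auto

lemma NN_pos: "\<sigma> permutes {..<n} \<Longrightarrow> NN n \<nu> \<sigma> > 0"
proof -
  assume "\<sigma> permutes {..<n}"
  then have "\<sigma> \<in> {\<alpha>. \<alpha> permutes {..<n} \<and> rel \<nu> \<sigma> \<alpha>}" by (simp add: rel_def)
  moreover have "finite {\<alpha>. \<alpha> permutes {..<n} \<and> rel \<nu> \<sigma> \<alpha>}"
    using finite_permutations[of "{..<n}"] by (rule rev_finite_subset) auto
  ultimately show ?thesis unfolding NN_def by (auto simp: card_gt_0_iff)
qed

lemma TS_sub_tensor:
  assumes "sum_list la = n" "pos la" "sum_list mu = n" "pos mu"
  shows "TS n la mu k k' \<subseteq> tensor_space (ind_space n la k) (ind_space n mu k')"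
proof
  fix \<Phi> assume \<Phi>: "\<Phi> \<in> TS n la mu k k'"
  define Pm where "Pm = {\<sigma>. \<sigma> permutes {..<n}}"
  have fP: "finite Pm" unfolding Pm_def by (rule finite_permutations) simp
  define cc where "cc p = \<Phi> (P (fst p), P (snd p)) / (of_nat (NN n la (fst p)) * of_nat (NN n mu (snd p)))" for p
  have main: "(\<Sum>p\<in>Pm \<times> Pm. cc p * ee n la k (fst p) x * ee n mu k' (snd p) y) = \<Phi> (x, y)" for x y
  proof (cases "x \<in> wreath n \<and> y \<in> wreath n")
    case False
    then have "\<Phi> (x, y) = 0" using \<Phi> unfolding TS_def by blast
    then show ?thesis using False by (auto simp: ee_def)
  next
    case True
    obtain t \<sigma> t' \<sigma>' where xy: "x = (t, \<sigma>)" "y = (t', \<sigma>')" by fastforce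
    have ps: "\<sigma> permutes {..<n}" "\<sigma>' permutes {..<n}" using True xy by (auto simp: wreath_iff)
    define A where "A = {\<alpha>\<in>Pm. rel la \<sigma> \<alpha>}"
    define B where "B = {\<beta>\<in>Pm. rel mu \<sigma>' \<beta>}"
    have "(\<Sum>p\<in>Pm \<times> Pm. cc p * ee n la k (fst p) x * ee n mu k' (snd p) y)
        = chi la k t * chi mu k' t' * (\<Sum>p\<in>Pm \<times> Pm. if rel la \<sigma> (fst p) \<and> rel mu \<sigma>' (snd p) then cc p else 0)"
      unfolding sum_distrib_left using True xy by (intro sum.cong refl) (auto simp: ee_def)
    also have "(\<Sum>p\<in>Pm \<times> Pm. if rel la \<sigma> (fst p) \<and> rel mu \<sigma>' (snd p) then cc p else 0) = (\<Sum>p\<in>A \<times> B. cc p)"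
    proof -
      have "A \<times> B = {p \<in> Pm \<times> Pm. rel la \<sigma> (fst p) \<and> rel mu \<sigma>' (snd p)}" unfolding A_def B_def by auto
      then show ?thesis using fP by (simp add: sum.inter_filter)
    qed
    also have "\<dots> = (\<Sum>p\<in>A \<times> B. \<Phi> (P \<sigma>, P \<sigma>') / (of_nat (NN n la \<sigma>) * of_nat (NN n mu \<sigma>')))"
    proof (intro sum.cong refl)
      fix p assume "p \<in> A \<times> B"
      then obtain \<alpha> \<beta> where p: "p = (\<alpha>, \<beta>)" "\<alpha> permutes {..<n}" "rel la \<sigma> \<alpha>" "\<beta> permutes {..<n}" "rel mu \<sigma>' \<beta>"
        unfolding A_def B_def Pm_def by auto
      have "\<Phi> (P \<alpha>, P \<beta>) = \<Phi> (P ((\<alpha> \<circ> inv \<sigma>) \<circ> \<sigma>), P ((\<beta> \<circ> inv \<sigma>') \<circ> \<sigma>'))"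
        using rel_to_lp(3)[OF ps(1) p(2,3)] rel_to_lp(3)[OF ps(2) p(4,5)] by simp
      also have "\<dots> = \<Phi> (P \<sigma>, P \<sigma>')" using \<Phi> unfolding TS_def
        using rel_to_lp(1,2)[OF ps(1) p(2,3)] rel_to_lp(1,2)[OF ps(2) p(4,5)] ps by blast
      finally show "cc p = \<Phi> (P \<sigma>, P \<sigma>') / (of_nat (NN n la \<sigma>) * of_nat (NN n mu \<sigma>'))"
        unfolding cc_def using p NN_eq[OF p(3)] NN_eq[OF p(5)] by simp
    qed
    also have "\<dots> = \<Phi> (P \<sigma>, P \<sigma>')"
    proof -
      have "card A = NN n la \<sigma>" "card B = NN n mu \<sigma>'" unfolding A_def B_def NN_def Pm_def by simp_all
      then show ?thesis using NN_pos[OF ps(1), of la] NN_pos[OF ps(2), of mu] by (simp add: card_cartesian_product)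
    qed
    finally show ?thesis using \<Phi> True xy unfolding TS_def by auto
  qed
  obtain h where h: "bij_betw h {0..<card (Pm \<times> Pm)} (Pm \<times> Pm)"
    using ex_bij_betw_nat_finite[of "Pm \<times> Pm"] fP by blast
  define m where "m = card (Pm \<times> Pm)"
  have "\<Phi> = (\<lambda>(x, y). \<Sum>i<m. cc (h i) * ee n la k (fst (h i)) x * ee n mu k' (snd (h i)) y)"
  proof (intro ext, clarify)
    fix x y
    have "(\<Sum>i<m. cc (h i) * ee n la k (fst (h i)) x * ee n mu k' (snd (h i)) y)
      = (\<Sum>p\<in>Pm \<times> Pm. cc p * ee n la k (fst p) x * ee n mu k' (snd p) y)"
      unfolding m_def lessThan_atLeast0 by (rule sum.reindex_bij_betw[OF h])
    then show "\<Phi> (x, y) = (\<Sum>i<m. cc (h i) * ee n la k (fst (h i)) x * ee n mu k' (snd (h i)) y)"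
      using main by simp
  qed
  moreover have "\<forall>i<m. ee n la k (fst (h i)) \<in> ind_space n la k \<and> ee n mu k' (snd (h i)) \<in> ind_space n mu k'"
    using ee_mem assms by blast
  ultimately show "\<Phi> \<in> tensor_space (ind_space n la k) (ind_space n mu k')"
    unfolding tensor_space_def mem_Collect_eq
    by (intro exI[of _ m] exI[of _ "\<lambda>i. cc (h i)"] exI[of _ "\<lambda>i. ee n la k (fst (h i))"]
        exI[of _ "\<lambda>i. ee n mu k' (snd (h i))"] conjI) simp_all
qed


definition idx :: "nat \<Rightarrow> nat \<Rightarrow> (nat \<Rightarrow> nat \<Rightarrow> nat) \<Rightarrow> (nat \<times> nat) list" where
  "idx p q B = [(a, b). a \<leftarrow> [0..<p], b \<leftarrow> [0..<q], B a b \<noteq> 0]"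

lemma mat_comp_idx: "mat_comp p q B = map (\<lambda>(a, b). B a b) (idx p q B)"
  unfolding mat_comp_def idx_def by (auto simp: map_concat comp_def intro!: arg_cong[where f=concat] map_cong)

lemma mat_wts_idx: "mat_wts p q B k k' = map (\<lambda>(a, b). k ! a + k' ! b) (idx p q B)"
  unfolding mat_wts_def idx_def by (auto simp: map_concat comp_def intro!: arg_cong[where f=concat] map_cong)

lemma set_idx: "set (idx p q B) = {(a, b). a < p \<and> b < q \<and> B a b \<noteq> 0}"
  unfolding idx_def by auto

lemma idx_Suc: "idx (Suc p) q B = idx p q B @ map (\<lambda>b. (p, b)) (filter (\<lambda>b. B p b \<noteq> 0) [0..<q])"
  unfolding idx_def by (induction q) auto

lemma distinct_idx: "distinct (idx p q B)"
proof (induction p)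
  case 0 then show ?case by (simp add: idx_def)
next
  case (Suc p)
  then show ?case by (auto simp: idx_Suc set_idx distinct_map inj_on_def)
qed

lemma sorted_idx: "sorted (map fst (idx p q B))"
proof (induction p)
  case 0 then show ?case by (simp add: idx_def)
next
  case (Suc p)
  then show ?case by (auto simp: idx_Suc set_idx sorted_append comp_def map_replicate_const)
qed


definition Mm :: "nat \<Rightarrow> nat list \<Rightarrow> nat list \<Rightarrow> (nat \<Rightarrow> nat) \<Rightarrow> nat \<Rightarrow> nat \<Rightarrow> nat" where
  "Mm n la mu \<gamma> = (\<lambda>a b. card {i. i < n \<and> lab la i = a \<and> lab mu (\<gamma> i) = b})"

lemma lab_lt': "sum_list \<nu> = n \<Longrightarrow> pos \<nu> \<Longrightarrow> i < n \<Longrightarrow> lab \<nu> i < length \<nu>"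
  using lab_lt[of \<nu> i] by (simp add: pos_def)

lemma card_fib:
  assumes "sum_list \<nu> = n" "pos \<nu>"
  shows "card {i. i < n \<and> lab \<nu> i = a} = (if a < length \<nu> then \<nu> ! a else 0)"
proof (cases "a < length \<nu>")
  case True then show ?thesis using card_lab[of \<nu> a] assms by (simp add: pos_def)
next
  case False
  have "{i. i < n \<and> lab \<nu> i = a} = {}" using lab_lt'[OF assms] False by fastforce
  then show ?thesis using False by simp
qed

lemma card_group:
  assumes "finite S" "finite T" "g ` S \<subseteq> T"
  shows "(\<Sum>y\<in>T. card {x. x \<in> S \<and> g x = y}) = card S"
  using sum.group[OF assms, of "\<lambda>_. (1::nat)"] by simp

lemma perm_lt: "\<gamma> permutes {..<n} \<Longrightarrow> i < n \<Longrightarrow> \<gamma> i < n"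
  using permutes_in_image[of \<gamma> "{..<n}" i] by simp

lemma perm_ge: "\<gamma> permutes {..<n} \<Longrightarrow> \<not> i < n \<Longrightarrow> \<gamma> i = i"
  using permutes_not_in[of \<gamma> "{..<n}" i] by simp

lemma Mm_T:
  assumes la: "sum_list la = n" "pos la" and mu: "sum_list mu = n" "pos mu" and g: "\<gamma> permutes {..<n}"
  shows "Mm n la mu \<gamma> \<in> Tmat la mu"
proof -
  have gi: "\<gamma> i < n" if "i < n" for i using perm_lt[OF g that] .
  have z: "Mm n la mu \<gamma> a b = 0" if "length la \<le> a \<or> length mu \<le> b" for a b
  proof -
    have "{i. i < n \<and> lab la i = a \<and> lab mu (\<gamma> i) = b} = {}"
      using that lab_lt'[OF la] lab_lt'[OF mu] gi by fastforce
    then show ?thesis by (simp add: Mm_def)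
  qed
  have r: "(\<Sum>b<length mu. Mm n la mu \<gamma> a b) = la ! a" if "a < length la" for a
  proof -
    let ?S = "{i. i < n \<and> lab la i = a}"
    have "(\<Sum>b<length mu. Mm n la mu \<gamma> a b) = (\<Sum>b\<in>{..<length mu}. card {i. i \<in> ?S \<and> lab mu (\<gamma> i) = b})"
      unfolding Mm_def by (intro sum.cong refl arg_cong[where f=card]) auto
    also have "\<dots> = card ?S"
      by (rule card_group) (use lab_lt'[OF mu] gi in auto)
    also have "\<dots> = la ! a" using card_fib[OF la] that by simp
    finally show ?thesis .
  qed
  have c: "(\<Sum>a<length la. Mm n la mu \<gamma> a b) = mu ! b" if "b < length mu" for b
  proof -
    let ?S = "{i. i < n \<and> lab mu (\<gamma> i) = b}"
    have "(\<Sum>a<length la. Mm n la mu \<gamma> a b) = (\<Sum>a\<in>{..<length la}. card {i. i \<in> ?S \<and> lab la i = a})"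
      unfolding Mm_def by (intro sum.cong refl arg_cong[where f=card]) auto
    also have "\<dots> = card ?S"
      by (rule card_group) (use lab_lt'[OF la] in auto)
    also have "\<gamma> ` ?S = {j. j < n \<and> lab mu j = b}"
    proof (intro set_eqI iffI)
      fix j assume "j \<in> {j. j < n \<and> lab mu j = b}"
      then have "inv \<gamma> j \<in> ?S" "\<gamma> (inv \<gamma> j) = j"
        using perm_lt[OF permutes_inv[OF g]] permutes_inverses(1)[OF g] by auto
      then show "j \<in> \<gamma> ` ?S" by (metis imageI)
    qed (use gi in auto)
    then have "card ?S = card {j. j < n \<and> lab mu j = b}"
      using card_image[of \<gamma> ?S] permutes_inj[OF g] by (metis inj_on_subset subset_UNIV)
    also have "\<dots> = mu ! b" using card_fib[OF mu] that by simp
    finally show ?thesis .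
  qed
  show ?thesis unfolding Tmat_def using z r c by blast
qed

lemma Mm_inv:
  assumes k: "\<kappa> permutes {..<n}" "lp la \<kappa>" and k': "\<kappa>' permutes {..<n}" "lp mu \<kappa>'"
    and g: "\<gamma> permutes {..<n}"
  shows "Mm n la mu (\<kappa>' \<circ> \<gamma> \<circ> inv \<kappa>) = Mm n la mu \<gamma>"
proof (intro ext)
  fix a b
  let ?S = "{j. j < n \<and> lab la j = a \<and> lab mu (\<gamma> j) = b}"
  have "{i. i < n \<and> lab la i = a \<and> lab mu ((\<kappa>' \<circ> \<gamma> \<circ> inv \<kappa>) i) = b} = \<kappa> ` ?S"
  proof (intro set_eqI iffI)
    fix i assume i: "i \<in> {i. i < n \<and> lab la i = a \<and> lab mu ((\<kappa>' \<circ> \<gamma> \<circ> inv \<kappa>) i) = b}"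
    have "\<kappa> (inv \<kappa> i) = i" using permutes_inverses(1)[OF k(1)] by simp
    moreover have "inv \<kappa> i \<in> ?S"
    proof -
      have "lab la (inv \<kappa> i) = lab la (\<kappa> (inv \<kappa> i))" using k(2) by (simp add: lp_def)
      then show ?thesis using i perm_lt[OF permutes_inv[OF k(1)]] k'(2) permutes_inverses(1)[OF k(1)]
        by (simp add: lp_def)
    qed
    ultimately show "i \<in> \<kappa> ` ?S" by (metis imageI)
  next
    fix i assume "i \<in> \<kappa> ` ?S"
    then obtain j where "j \<in> ?S" "i = \<kappa> j" by auto
    then show "i \<in> {i. i < n \<and> lab la i = a \<and> lab mu ((\<kappa>' \<circ> \<gamma> \<circ> inv \<kappa>) i) = b}"
      using perm_lt[OF k(1)] k(2) k'(2) permutes_inverses(2)[OF k(1)] by (simp add: lp_def)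
  qed
  then show "Mm n la mu (\<kappa>' \<circ> \<gamma> \<circ> inv \<kappa>) a b = Mm n la mu \<gamma> a b"
    unfolding Mm_def using card_image[of \<kappa> ?S] permutes_inj[OF k(1)]
    by (metis inj_on_subset subset_UNIV)
qed

lemma Mm_coset:
  assumes g: "\<gamma> permutes {..<n}" and p: "\<pi> permutes {..<n}" and eq: "Mm n la mu \<gamma> = Mm n la mu \<pi>"
  obtains \<alpha> \<beta> where "\<alpha> permutes {..<n}" "lp la \<alpha>" "\<beta> permutes {..<n}" "lp mu \<beta>" "\<gamma> = \<beta> \<circ> \<pi> \<circ> inv \<alpha>"
proof -
  have "card {i. i < n \<and> (lab la i, lab mu (\<pi> i)) = v} = card {i. i < n \<and> (lab la i, lab mu (\<gamma> i)) = v}" for v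
  proof -
    obtain a b where v: "v = (a, b)" by fastforce
    have "card {i. i < n \<and> (lab la i, lab mu (\<pi> i)) = v} = Mm n la mu \<pi> a b" by (simp add: Mm_def v)
    also have "\<dots> = Mm n la mu \<gamma> a b" by (simp add: eq)
    also have "\<dots> = card {i. i < n \<and> (lab la i, lab mu (\<gamma> i)) = v}" by (simp add: Mm_def v)
    finally show ?thesis .
  qed
  then obtain \<alpha> where a: "\<alpha> permutes {..<n}" and al: "\<And>i. i < n \<Longrightarrow> (lab la (\<alpha> i), lab mu (\<gamma> (\<alpha> i))) = (lab la i, lab mu (\<pi> i))"
    by (rule perm_labels) blast
  have "lp la \<alpha>" unfolding lp_def
  proof
    fix i show "lab la (\<alpha> i) = lab la i"
      using al[of i] perm_ge[OF a, of i] by (cases "i < n") auto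
  qed
  define \<beta> where "\<beta> = \<gamma> \<circ> \<alpha> \<circ> inv \<pi>"
  have b: "\<beta> permutes {..<n}" unfolding \<beta>_def using g a p by (intro permutes_compose permutes_inv)
  have "lp mu \<beta>" unfolding lp_def
  proof
    fix z show "lab mu (\<beta> z) = lab mu z"
    proof (cases "z < n")
      case True
      then have "inv \<pi> z < n" using perm_lt[OF permutes_inv[OF p]] by simp
      then show ?thesis using al[of "inv \<pi> z"] permutes_inverses(1)[OF p] by (simp add: \<beta>_def)
    next
      case False then show ?thesis using perm_ge[OF b] by simp
    qed
  qed
  moreover have "\<gamma> = \<beta> \<circ> \<pi> \<circ> inv \<alpha>"
    unfolding \<beta>_def using permutes_inverses[OF p] permutes_inverses[OF a] by (auto simp: fun_eq_iff)
  ultimately show ?thesis using that a b \<open>lp la \<alpha>\<close> by blast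
qed


definition IX :: "nat list \<Rightarrow> nat list \<Rightarrow> (nat \<Rightarrow> nat \<Rightarrow> nat) \<Rightarrow> (nat \<times> nat) list" where
  "IX la mu B = idx (length la) (length mu) B"

definition CP :: "nat list \<Rightarrow> nat list \<Rightarrow> (nat \<Rightarrow> nat \<Rightarrow> nat) \<Rightarrow> nat list" where
  "CP la mu B = mat_comp (length la) (length mu) B"

lemma CP_IX: "CP la mu B = map (\<lambda>(a, b). B a b) (IX la mu B)"
  by (simp add: CP_def IX_def mat_comp_idx)

lemma len_CP: "length (CP la mu B) = length (IX la mu B)"
  by (simp add: CP_IX)

lemma CP_nth: "r < length (IX la mu B) \<Longrightarrow> CP la mu B ! r = (\<lambda>(a, b). B a b) (IX la mu B ! r)"
  by (simp add: CP_IX)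

lemma set_IX: "set (IX la mu B) = {(a, b). a < length la \<and> b < length mu \<and> B a b \<noteq> 0}"
  by (simp add: IX_def set_idx)

lemma distinct_IX: "distinct (IX la mu B)"
  by (simp add: IX_def distinct_idx)

lemma pos_CP: "pos (CP la mu B)"
  unfolding pos_def CP_IX using set_IX by auto

lemma Tmat_zero: "B \<in> Tmat la mu \<Longrightarrow> \<not> (a < length la \<and> b < length mu) \<Longrightarrow> B a b = 0"
  unfolding Tmat_def by auto

lemma Tmat_row: "B \<in> Tmat la mu \<Longrightarrow> a < length la \<Longrightarrow> (\<Sum>b<length mu. B a b) = la ! a"
  unfolding Tmat_def by auto

lemma Tmat_col: "B \<in> Tmat la mu \<Longrightarrow> b < length mu \<Longrightarrow> (\<Sum>a<length la. B a b) = mu ! b"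
  unfolding Tmat_def by auto

lemma sum_IX_set:
  assumes "B \<in> Tmat la mu"
  shows "(\<Sum>x\<in>{x\<in>set (IX la mu B). Q x}. (\<lambda>(a, b). B a b) x)
       = (\<Sum>x\<in>{x\<in>{..<length la} \<times> {..<length mu}. Q x}. (\<lambda>(a, b). B a b) x)"
  by (rule sum.mono_neutral_left) (auto simp: set_IX)

lemma sum_CP:
  assumes B: "B \<in> Tmat la mu" and la: "sum_list la = n"
  shows "sum_list (CP la mu B) = n"
proof -
  have "sum_list (CP la mu B) = (\<Sum>x\<in>set (IX la mu B). (\<lambda>(a, b). B a b) x)"
    unfolding CP_IX by (rule sum_list_distinct_conv_sum_set[OF distinct_IX])
  also have "\<dots> = (\<Sum>x\<in>{..<length la} \<times> {..<length mu}. (\<lambda>(a, b). B a b) x)"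
    using sum_IX_set[OF B, of "\<lambda>_. True"] by simp
  also have "\<dots> = (\<Sum>a<length la. \<Sum>b<length mu. B a b)"
    by (simp add: sum.cartesian_product)
  also have "\<dots> = (\<Sum>a<length la. la ! a)" using Tmat_row[OF B] by simp
  also have "\<dots> = n" using la by (simp add: sum_list_sum_nth atLeast0LessThan)
  finally show ?thesis .
qed

lemma fib_CP:
  assumes B: "B \<in> Tmat la mu" and la: "sum_list la = n"
  shows "card {i. i < n \<and> g (IX la mu B ! lab (CP la mu B) i) = v}
       = (\<Sum>x\<in>{x\<in>{..<length la} \<times> {..<length mu}. g x = v}. (\<lambda>(a, b). B a b) x)"
proof -
  let ?C = "CP la mu B" and ?I = "IX la mu B"
  have sc: "sum_list ?C = n" by (rule sum_CP[OF B la])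
  let ?R = "{r. r < length ?I \<and> g (?I ! r) = v}"
  have "{i. i < n \<and> g (?I ! lab ?C i) = v} = (\<Union>r\<in>?R. {i. i < n \<and> lab ?C i = r})"
    using lab_lt'[OF sc pos_CP] len_CP by auto
  then have "card {i. i < n \<and> g (?I ! lab ?C i) = v} = (\<Sum>r\<in>?R. card {i. i < n \<and> lab ?C i = r})"
    by (simp only:) (rule card_UN_disjoint, auto)
  also have "\<dots> = (\<Sum>r\<in>?R. (\<lambda>(a, b). B a b) (?I ! r))"
    by (intro sum.cong refl) (simp add: card_fib[OF sc pos_CP] len_CP CP_nth)
  also have "\<dots> = (\<Sum>x\<in>{x\<in>set ?I. g x = v}. (\<lambda>(a, b). B a b) x)"
  proof -
    have "inj_on (nth ?I) ?R" by (rule inj_on_nth[OF distinct_IX]) auto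
    moreover have "nth ?I ` ?R = {x\<in>set ?I. g x = v}" by (force simp: in_set_conv_nth image_iff)
    ultimately show ?thesis by (metis (no_types, lifting) sum.reindex_cong)
  qed
  also have "\<dots> = (\<Sum>x\<in>{x\<in>{..<length la} \<times> {..<length mu}. g x = v}. (\<lambda>(a, b). B a b) x)"
    by (rule sum_IX_set[OF B])
  finally show ?thesis .
qed

lemma fib_fst:
  assumes B: "B \<in> Tmat la mu" and la: "sum_list la = n" "pos la"
  shows "card {i. i < n \<and> fst (IX la mu B ! lab (CP la mu B) i) = a} = card {i. i < n \<and> lab la i = a}"
proof -
  have "{x\<in>{..<length la} \<times> {..<length mu}. fst x = a} = (if a < length la then {a} \<times> {..<length mu} else {})"
    by auto
  then have "(\<Sum>x\<in>{x\<in>{..<length la} \<times> {..<length mu}. fst x = a}. (\<lambda>(a, b). B a b) x)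
     = (if a < length la then la ! a else 0)"
    using Tmat_row[OF B, of a] sum.cartesian_product[of "\<lambda>x y. B x y" "{..<length mu}" "{a}", symmetric] by simp
  then show ?thesis using fib_CP[OF B la(1), of fst a] card_fib[OF la] by simp
qed

lemma fib_snd:
  assumes B: "B \<in> Tmat la mu" and la: "sum_list la = n" and mu: "sum_list mu = n" "pos mu"
  shows "card {i. i < n \<and> snd (IX la mu B ! lab (CP la mu B) i) = b} = card {i. i < n \<and> lab mu i = b}"
proof -
  have "{x\<in>{..<length la} \<times> {..<length mu}. snd x = b} = (if b < length mu then {..<length la} \<times> {b} else {})"
    by auto
  then have "(\<Sum>x\<in>{x\<in>{..<length la} \<times> {..<length mu}. snd x = b}. (\<lambda>(a, b). B a b) x)
     = (if b < length mu then mu ! b else 0)"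
    using Tmat_col[OF B, of b] sum.cartesian_product[of "\<lambda>x y. B x y" "{b}" "{..<length la}", symmetric] by simp
  then show ?thesis using fib_CP[OF B la(1), of snd b] card_fib[OF mu] by simp
qed

lemma IX_fst:
  assumes B: "B \<in> Tmat la mu" and la: "sum_list la = n" "pos la" and i: "i < n"
  shows "fst (IX la mu B ! lab (CP la mu B) i) = lab la i"
proof (rule mono_fiber_eq[OF _ _ _ i, symmetric])
  show "lab la x \<le> lab la y" if "x \<le> y" "y < n" for x y using lab_mono that by blast
  show "fst (IX la mu B ! lab (CP la mu B) x) \<le> fst (IX la mu B ! lab (CP la mu B) y)" if "x \<le> y" "y < n" for x y
  proof -
    have sc: "sum_list (CP la mu B) = n" by (rule sum_CP[OF B la(1)])
    have "lab (CP la mu B) y < length (IX la mu B)" using lab_lt'[OF sc pos_CP that(2)] len_CP by simp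
    moreover have "lab (CP la mu B) x \<le> lab (CP la mu B) y" using lab_mono that(1) by blast
    ultimately show ?thesis
      using sorted_nth_mono[OF sorted_idx[of "length la" "length mu" B]] by (fastforce simp: IX_def)
  qed
  show "card {i. i < n \<and> lab la i = a} = card {i. i < n \<and> fst (IX la mu B ! lab (CP la mu B) i) = a}" for a
    using fib_fst[OF B la] by simp
qed

lemma piB_ex:
  assumes B: "B \<in> Tmat la mu" and la: "sum_list la = n" "pos la" and mu: "sum_list mu = n" "pos mu"
  shows "\<exists>\<pi>. \<pi> permutes {..<n} \<and> Mm n la mu \<pi> = B \<and>
     (\<forall>i<n. IX la mu B ! lab (CP la mu B) i = (lab la i, lab mu (\<pi> i)))"
proof -
  have "card {i. i < n \<and> snd (IX la mu B ! lab (CP la mu B) i) = v} = card {i. i < n \<and> lab mu i = v}" for v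
    using fib_snd[OF B la(1) mu] by simp
  then obtain \<pi> where p: "\<pi> permutes {..<n}" and pl: "\<And>i. i < n \<Longrightarrow> lab mu (\<pi> i) = snd (IX la mu B ! lab (CP la mu B) i)"
    by (rule perm_labels) blast
  have e: "IX la mu B ! lab (CP la mu B) i = (lab la i, lab mu (\<pi> i))" if "i < n" for i
    using IX_fst[OF B la that] pl[OF that] by (metis prod.collapse)
  have "Mm n la mu \<pi> a b = B a b" for a b
  proof -
    have "Mm n la mu \<pi> a b = card {i. i < n \<and> IX la mu B ! lab (CP la mu B) i = (a, b)}"
      unfolding Mm_def by (intro arg_cong[where f=card]) (auto simp: e)
    also have "\<dots> = (\<Sum>x\<in>{x\<in>{..<length la} \<times> {..<length mu}. x = (a, b)}. (\<lambda>(a, b). B a b) x)"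
      using fib_CP[OF B la(1), of "\<lambda>x. x" "(a, b)"] by simp
    also have "\<dots> = B a b"
    proof (cases "a < length la \<and> b < length mu")
      case True
      then have "{x\<in>{..<length la} \<times> {..<length mu}. x = (a, b)} = {(a, b)}" by auto
      then show ?thesis by simp
    next
      case False
      then have "{x\<in>{..<length la} \<times> {..<length mu}. x = (a, b)} = {}" by auto
      then show ?thesis using Tmat_zero[OF B False] by simp
    qed
    finally show ?thesis .
  qed
  then show ?thesis using p e by blast
qed


definition piB :: "nat \<Rightarrow> nat list \<Rightarrow> nat list \<Rightarrow> (nat \<Rightarrow> nat \<Rightarrow> nat) \<Rightarrow> nat \<Rightarrow> nat" where
  "piB n la mu B = (SOME \<pi>. \<pi> permutes {..<n} \<and> Mm n la mu \<pi> = B \<and>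
     (\<forall>i<n. IX la mu B ! lab (CP la mu B) i = (lab la i, lab mu (\<pi> i))))"

definition WT :: "nat list \<Rightarrow> nat list \<Rightarrow> (nat \<Rightarrow> nat \<Rightarrow> nat) \<Rightarrow> int list \<Rightarrow> int list \<Rightarrow> int list" where
  "WT la mu B k k' = mat_wts (length la) (length mu) B k k'"

context
  fixes n :: nat and la mu :: "nat list"
  assumes la: "sum_list la = n" "pos la" and mu: "sum_list mu = n" "pos mu"
begin

lemma piB:
  assumes "B \<in> Tmat la mu"
  shows "piB n la mu B permutes {..<n}" "Mm n la mu (piB n la mu B) = B"
    "\<And>i. i < n \<Longrightarrow> IX la mu B ! lab (CP la mu B) i = (lab la i, lab mu (piB n la mu B i))"
  using someI_ex[OF piB_ex[OF assms la mu]] unfolding piB_def by auto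

lemma lab_CP_lt: "B \<in> Tmat la mu \<Longrightarrow> i < n \<Longrightarrow> lab (CP la mu B) i < length (IX la mu B)"
  using lab_lt'[OF sum_CP[OF _ la(1)] pos_CP] len_CP by metis

lemma stab:
  assumes B: "B \<in> Tmat la mu" and z: "\<zeta> permutes {..<n}"
  shows "lp (CP la mu B) \<zeta> \<longleftrightarrow> lp la \<zeta> \<and> lp mu (piB n la mu B \<circ> \<zeta> \<circ> inv (piB n la mu B))"
proof -
  let ?\<pi> = "piB n la mu B" and ?I = "IX la mu B" and ?C = "CP la mu B"
  have p: "?\<pi> permutes {..<n}" by (rule piB(1)[OF B])
  have e: "\<And>i. i < n \<Longrightarrow> ?I ! lab ?C i = (lab la i, lab mu (?\<pi> i))" by (rule piB(3)[OF B])
  show ?thesis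
  proof
    assume l: "lp ?C \<zeta>"
    have "lp la \<zeta>" unfolding lp_def
    proof
      fix x show "lab la (\<zeta> x) = lab la x"
      proof (cases "x < n")
        case True
        then have "?I ! lab ?C (\<zeta> x) = ?I ! lab ?C x" using l by (simp add: lp_def)
        then show ?thesis using e[OF True] e[OF perm_lt[OF z True]] by simp
      qed (simp add: perm_ge[OF z])
    qed
    moreover have "lp mu (?\<pi> \<circ> \<zeta> \<circ> inv ?\<pi>)" unfolding lp_def
    proof
      fix x show "lab mu ((?\<pi> \<circ> \<zeta> \<circ> inv ?\<pi>) x) = lab mu x"
      proof (cases "x < n")
        case True
        let ?y = "inv ?\<pi> x"
        have y: "?y < n" using perm_lt[OF permutes_inv[OF p] True] .
        then have "?I ! lab ?C (\<zeta> ?y) = ?I ! lab ?C ?y" using l by (simp add: lp_def)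
        then have "lab mu (?\<pi> (\<zeta> ?y)) = lab mu (?\<pi> ?y)" using e[OF y] e[OF perm_lt[OF z y]] by simp
        then show ?thesis using permutes_inverses(1)[OF p] by simp
      next
        case False
        then show ?thesis using perm_ge[OF permutes_inv[OF p] False] perm_ge[OF z False] perm_ge[OF p False] by simp
      qed
    qed
    ultimately show "lp la \<zeta> \<and> lp mu (?\<pi> \<circ> \<zeta> \<circ> inv ?\<pi>)" ..
  next
    assume "lp la \<zeta> \<and> lp mu (?\<pi> \<circ> \<zeta> \<circ> inv ?\<pi>)"
    then have l1: "\<And>x. lab la (\<zeta> x) = lab la x" and l2: "\<And>x. lab mu (?\<pi> (\<zeta> (inv ?\<pi> x))) = lab mu x"
      by (auto simp: lp_def)
    show "lp ?C \<zeta>" unfolding lp_def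
    proof
      fix x show "lab ?C (\<zeta> x) = lab ?C x"
      proof (cases "x < n")
        case True
        have "lab mu (?\<pi> (\<zeta> x)) = lab mu (?\<pi> x)" using l2[of "?\<pi> x"] permutes_inverses(2)[OF p] by simp
        then have "?I ! lab ?C (\<zeta> x) = ?I ! lab ?C x" using e[OF True] e[OF perm_lt[OF z True]] l1 by simp
        then show ?thesis using nth_eq_iff_index_eq[OF distinct_IX lab_CP_lt[OF B perm_lt[OF z True]] lab_CP_lt[OF B True]]
          by simp
      qed (simp add: perm_ge[OF z])
    qed
  qed
qed

lemma chi_CP:
  assumes B: "B \<in> Tmat la mu" and t: "\<And>i. i < n \<Longrightarrow> t i \<noteq> 0"
  shows "chi (CP la mu B) (WT la mu B k k') t = chi la k t * chi mu k' (\<lambda>i. t (inv (piB n la mu B) i))"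
proof -
  let ?\<pi> = "piB n la mu B" and ?I = "IX la mu B" and ?C = "CP la mu B"
  have p: "?\<pi> permutes {..<n}" by (rule piB(1)[OF B])
  have w: "WT la mu B k k' ! lab ?C j = k ! lab la j + k' ! lab mu (?\<pi> j)" if "j < n" for j
    using piB(3)[OF B that] lab_CP_lt[OF B that]
    by (simp add: WT_def mat_wts_idx IX_def[symmetric])
  have "chi ?C (WT la mu B k k') t = (\<Prod>j<n. t j powi (k ! lab la j) * t j powi (k' ! lab mu (?\<pi> j)))"
    unfolding chi_def sum_CP[OF B la(1)] using w t by (intro prod.cong refl) (simp add: power_int_add)
  also have "\<dots> = chi la k t * (\<Prod>j<n. t j powi (k' ! lab mu (?\<pi> j)))"
    by (simp add: prod.distrib chi_def la(1))
  also have "(\<Prod>j<n. t j powi (k' ! lab mu (?\<pi> j))) = chi mu k' (\<lambda>i. t (inv ?\<pi> i))"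
  proof -
    have b: "bij_betw ?\<pi> {..<n} {..<n}" using p by (rule permutes_imp_bij)
    have "chi mu k' (\<lambda>i. t (inv ?\<pi> i)) = (\<Prod>j<n. t (inv ?\<pi> (?\<pi> j)) powi (k' ! lab mu (?\<pi> j)))"
      unfolding chi_def mu(1) by (rule prod.reindex_bij_betw[OF b, symmetric])
    then show ?thesis using permutes_inverses(2)[OF p] by simp
  qed
  finally show ?thesis .
qed

end


definition Fg :: "nat \<Rightarrow> nat list \<Rightarrow> nat list \<Rightarrow> ((nat \<Rightarrow> nat \<Rightarrow> nat) \<times> wgrp \<Rightarrow> complex)
     \<Rightarrow> (nat \<Rightarrow> nat) \<Rightarrow> (nat \<Rightarrow> nat) \<Rightarrow> complex" where
  "Fg n la mu \<Psi> \<sigma> \<sigma>' = (let \<gamma> = \<sigma>' \<circ> inv \<sigma>; B = Mm n la mu \<gamma>;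
     \<alpha> = (SOME \<alpha>. \<alpha> permutes {..<n} \<and> lp la \<alpha> \<and>
            (\<exists>\<beta>. \<beta> permutes {..<n} \<and> lp mu \<beta> \<and> \<gamma> = \<beta> \<circ> piB n la mu B \<circ> inv \<alpha>))
   in \<Psi> (B, P (inv \<alpha> \<circ> \<sigma>)))"

definition fmap :: "nat \<Rightarrow> nat list \<Rightarrow> nat list \<Rightarrow> (wgrp \<times> wgrp \<Rightarrow> complex) \<Rightarrow> ((nat \<Rightarrow> nat \<Rightarrow> nat) \<times> wgrp \<Rightarrow> complex)" where
  "fmap n la mu \<Phi> = (\<lambda>(B, x). if B \<in> Tmat la mu \<and> x \<in> wreath n then \<Phi> (x, wmult (P (piB n la mu B)) x) else 0)"

definition gmap :: "nat \<Rightarrow> nat list \<Rightarrow> nat list \<Rightarrow> int list \<Rightarrow> int list \<Rightarrow> ((nat \<Rightarrow> nat \<Rightarrow> nat) \<times> wgrp \<Rightarrow> complex) \<Rightarrow> (wgrp \<times> wgrp \<Rightarrow> complex)" where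
  "gmap n la mu k k' \<Psi> = (\<lambda>(x, y). if x \<in> wreath n \<and> y \<in> wreath n
      then chi la k (fst x) * chi mu k' (fst y) * Fg n la mu \<Psi> (snd x) (snd y) else 0)"

lemma wmult_P_left: "wmult (P \<pi>) (t, \<sigma>) = (\<lambda>i. t (inv \<pi> i), \<pi> \<circ> \<sigma>)"
  by (simp add: wmult_simp)

context
  fixes n :: nat and la mu :: "nat list" and k k' :: "int list"
  assumes la: "sum_list la = n" "pos la" and mu: "sum_list mu = n" "pos mu"
begin

lemma Mperm_B: "B \<in> Tmat la mu \<Longrightarrow>
  Mperm (mat_comp (length la) (length mu) B) (mat_wts (length la) (length mu) B k k')
   = ind_space n (CP la mu B) (WT la mu B k k')"
  using sum_CP[OF _ la(1)] by (simp add: Mperm_def CP_def WT_def)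

lemma dsum_mem: "\<Psi> \<in> dsum_space la mu k k' \<Longrightarrow> B \<in> Tmat la mu \<Longrightarrow>
   (\<lambda>x. \<Psi> (B, x)) \<in> ind_space n (CP la mu B) (WT la mu B k k')"
  using Mperm_B unfolding dsum_space_def by auto

lemma dsum_zero: "\<Psi> \<in> dsum_space la mu k k' \<Longrightarrow> B \<notin> Tmat la mu \<Longrightarrow> \<Psi> (B, x) = 0"
  unfolding dsum_space_def by (cases x) auto

lemma Fg_eq:
  assumes \<Psi>: "\<Psi> \<in> dsum_space la mu k k'" and B: "B \<in> Tmat la mu"
    and s: "\<sigma> permutes {..<n}" and a: "\<alpha> permutes {..<n}" "lp la \<alpha>"
    and b: "\<beta> permutes {..<n}" "lp mu \<beta>"
    and eq: "\<sigma>' \<circ> inv \<sigma> = \<beta> \<circ> piB n la mu B \<circ> inv \<alpha>"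
  shows "Fg n la mu \<Psi> \<sigma> \<sigma>' = \<Psi> (B, P (inv \<alpha> \<circ> \<sigma>))"
proof -
  let ?\<pi> = "piB n la mu B"
  have p: "?\<pi> permutes {..<n}" by (rule piB(1)[OF la mu B])
  have MB: "Mm n la mu (\<sigma>' \<circ> inv \<sigma>) = B"
    unfolding eq using Mm_inv[OF a b p] piB(2)[OF la mu B] by simp
  define Q where "Q = (\<lambda>\<alpha>. \<alpha> permutes {..<n} \<and> lp la \<alpha> \<and>
            (\<exists>\<beta>. \<beta> permutes {..<n} \<and> lp mu \<beta> \<and> \<sigma>' \<circ> inv \<sigma> = \<beta> \<circ> ?\<pi> \<circ> inv \<alpha>))"
  define \<alpha>0 where "\<alpha>0 = (SOME \<alpha>. Q \<alpha>)"
  have "Q \<alpha>" unfolding Q_def using a b eq by blast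
  then have "Q \<alpha>0" unfolding \<alpha>0_def by (rule someI[where P=Q])
  then obtain \<beta>0 where a0: "\<alpha>0 permutes {..<n}" "lp la \<alpha>0" and b0: "\<beta>0 permutes {..<n}" "lp mu \<beta>0"
    and eq0: "\<sigma>' \<circ> inv \<sigma> = \<beta>0 \<circ> ?\<pi> \<circ> inv \<alpha>0" unfolding Q_def by blast
  have F: "Fg n la mu \<Psi> \<sigma> \<sigma>' = \<Psi> (B, P (inv \<alpha>0 \<circ> \<sigma>))"
    unfolding Fg_def Let_def MB \<alpha>0_def Q_def by simp
  define \<zeta> where "\<zeta> = inv \<alpha>0 \<circ> \<alpha>"
  have z1: "inv \<alpha>0 \<circ> \<sigma> = \<zeta> \<circ> (inv \<alpha> \<circ> \<sigma>)"
    unfolding \<zeta>_def using permutes_inverses(1)[OF a(1)] by (simp add: fun_eq_iff)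
  have zp: "\<zeta> permutes {..<n}" unfolding \<zeta>_def using a0 a by (intro permutes_compose permutes_inv)
  have zl: "lp la \<zeta>" unfolding \<zeta>_def using a0 a by (intro lp_comp lp_inv permutes_bij)
  have zz: "?\<pi> \<circ> \<zeta> \<circ> inv ?\<pi> = inv \<beta>0 \<circ> \<beta>"
  proof
    fix y
    let ?z = "\<alpha> (inv ?\<pi> y)"
    have "\<beta>0 (?\<pi> (inv \<alpha>0 ?z)) = \<beta> (?\<pi> (inv \<alpha> ?z))"
      using fun_cong[OF eq0, of ?z] fun_cong[OF eq, of ?z] by simp
    also have "\<dots> = \<beta> y" using permutes_inverses(2)[OF a(1)] permutes_inverses(1)[OF p] by simp
    finally have "inv \<beta>0 (\<beta>0 (?\<pi> (inv \<alpha>0 ?z))) = inv \<beta>0 (\<beta> y)" by simp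
    then show "(?\<pi> \<circ> \<zeta> \<circ> inv ?\<pi>) y = (inv \<beta>0 \<circ> \<beta>) y"
      using permutes_inverses(2)[OF b0(1)] by (simp add: \<zeta>_def)
  qed
  have "lp mu (?\<pi> \<circ> \<zeta> \<circ> inv ?\<pi>)" unfolding zz using b0 b by (intro lp_comp lp_inv permutes_bij)
  then have "lp (CP la mu B) \<zeta>" using stab[OF la mu B zp] zl by simp
  then have "\<Psi> (B, P (\<zeta> \<circ> (inv \<alpha> \<circ> \<sigma>))) = \<Psi> (B, P (inv \<alpha> \<circ> \<sigma>))"
    using ind_inv[OF dsum_mem[OF \<Psi> B] sum_CP[OF B la(1)] pos_CP zp, of "inv \<alpha> \<circ> \<sigma>"]
      s a by (simp add: permutes_compose permutes_inv)
  then show ?thesis using F z1 by simp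
qed

lemma Fg_ex:
  assumes s: "\<sigma> permutes {..<n}" and s': "\<sigma>' permutes {..<n}"
  shows "\<exists>B \<alpha> \<beta>. B \<in> Tmat la mu \<and> \<alpha> permutes {..<n} \<and> lp la \<alpha> \<and> \<beta> permutes {..<n} \<and> lp mu \<beta> \<and>
    \<sigma>' \<circ> inv \<sigma> = \<beta> \<circ> piB n la mu B \<circ> inv \<alpha>"
proof -
  let ?\<gamma> = "\<sigma>' \<circ> inv \<sigma>"
  have g: "?\<gamma> permutes {..<n}" using s s' by (intro permutes_compose permutes_inv)
  let ?B = "Mm n la mu ?\<gamma>"
  have B: "?B \<in> Tmat la mu" by (rule Mm_T[OF la mu g])
  have eqM: "Mm n la mu ?\<gamma> = Mm n la mu (piB n la mu ?B)" using piB(2)[OF la mu B] by simp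
  from eqM obtain \<alpha> \<beta> where "\<alpha> permutes {..<n}" "lp la \<alpha>" "\<beta> permutes {..<n}" "lp mu \<beta>"
    "?\<gamma> = \<beta> \<circ> piB n la mu ?B \<circ> inv \<alpha>"
    by (rule Mm_coset[OF g piB(1)[OF la mu B]]) blast
  then show ?thesis using B by blast
qed

lemma Fg_inv:
  assumes \<Psi>: "\<Psi> \<in> dsum_space la mu k k'"
    and k1: "\<kappa> permutes {..<n}" "lp la \<kappa>" and k2: "\<kappa>' permutes {..<n}" "lp mu \<kappa>'"
    and s: "\<sigma> permutes {..<n}" and s': "\<sigma>' permutes {..<n}"
  shows "Fg n la mu \<Psi> (\<kappa> \<circ> \<sigma>) (\<kappa>' \<circ> \<sigma>') = Fg n la mu \<Psi> \<sigma> \<sigma>'"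
proof -
  obtain B \<alpha> \<beta> where B: "B \<in> Tmat la mu" and a: "\<alpha> permutes {..<n}" "lp la \<alpha>"
    and b: "\<beta> permutes {..<n}" "lp mu \<beta>" and eq: "\<sigma>' \<circ> inv \<sigma> = \<beta> \<circ> piB n la mu B \<circ> inv \<alpha>"
    using Fg_ex[OF s s'] by blast
  have 1: "Fg n la mu \<Psi> \<sigma> \<sigma>' = \<Psi> (B, P (inv \<alpha> \<circ> \<sigma>))" by (rule Fg_eq[OF \<Psi> B s a b eq])
  have bk: "bij \<kappa>" "bij \<sigma>" "bij \<alpha>" using k1 s a by (auto intro: permutes_bij)
  have eq2: "(\<kappa>' \<circ> \<sigma>') \<circ> inv (\<kappa> \<circ> \<sigma>) = (\<kappa>' \<circ> \<beta>) \<circ> piB n la mu B \<circ> inv (\<kappa> \<circ> \<alpha>)"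
  proof
    fix x
    have "\<sigma>' (inv \<sigma> (inv \<kappa> x)) = \<beta> (piB n la mu B (inv \<alpha> (inv \<kappa> x)))" using fun_cong[OF eq, of "inv \<kappa> x"] by simp
    then show "((\<kappa>' \<circ> \<sigma>') \<circ> inv (\<kappa> \<circ> \<sigma>)) x = ((\<kappa>' \<circ> \<beta>) \<circ> piB n la mu B \<circ> inv (\<kappa> \<circ> \<alpha>)) x"
      using bk by (simp add: o_inv_distrib)
  qed
  have 2: "Fg n la mu \<Psi> (\<kappa> \<circ> \<sigma>) (\<kappa>' \<circ> \<sigma>') = \<Psi> (B, P (inv (\<kappa> \<circ> \<alpha>) \<circ> (\<kappa> \<circ> \<sigma>)))"
    by (rule Fg_eq[OF \<Psi> B _ _ _ _ _ eq2])
       (use k1 k2 s a b in \<open>auto intro: permutes_compose lp_comp\<close>)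
  have "inv (\<kappa> \<circ> \<alpha>) \<circ> (\<kappa> \<circ> \<sigma>) = inv \<alpha> \<circ> \<sigma>"
    using bk permutes_inverses(2)[OF k1(1)] by (simp add: o_inv_distrib fun_eq_iff)
  then show ?thesis using 1 2 by simp
qed

lemma Fg_one:
  assumes \<Psi>: "\<Psi> \<in> dsum_space la mu k k'" and B: "B \<in> Tmat la mu" and s: "\<sigma> permutes {..<n}"
  shows "Fg n la mu \<Psi> \<sigma> (piB n la mu B \<circ> \<sigma>) = \<Psi> (B, P \<sigma>)"
proof -
  have "(piB n la mu B \<circ> \<sigma>) \<circ> inv \<sigma> = id \<circ> piB n la mu B \<circ> inv id"
    using permutes_inverses(1)[OF s] by (simp add: fun_eq_iff)
  from Fg_eq[OF \<Psi> B s permutes_id lp_id permutes_id lp_id this] show ?thesis by simp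
qed

end


context
  fixes n :: nat and la mu :: "nat list" and k k' :: "int list"
  assumes la: "sum_list la = n" "pos la" and mu: "sum_list mu = n" "pos mu"
begin

lemma TS_red: "\<Phi> \<in> TS n la mu k k' \<Longrightarrow> x \<in> wreath n \<Longrightarrow> y \<in> wreath n \<Longrightarrow>
   \<Phi> (x, y) = chi la k (fst x) * chi mu k' (fst y) * \<Phi> (P (snd x), P (snd y))"
  unfolding TS_def by blast

lemma TS_zero: "\<Phi> \<in> TS n la mu k k' \<Longrightarrow> \<not> (x \<in> wreath n \<and> y \<in> wreath n) \<Longrightarrow> \<Phi> (x, y) = 0"
  unfolding TS_def by blast

lemma TS_inv: "\<Phi> \<in> TS n la mu k k' \<Longrightarrow> \<kappa> permutes {..<n} \<Longrightarrow> lp la \<kappa> \<Longrightarrow> \<kappa>' permutes {..<n} \<Longrightarrow> lp mu \<kappa>'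
  \<Longrightarrow> \<sigma> permutes {..<n} \<Longrightarrow> \<sigma>' permutes {..<n} \<Longrightarrow> \<Phi> (P (\<kappa> \<circ> \<sigma>), P (\<kappa>' \<circ> \<sigma>')) = \<Phi> (P \<sigma>, P \<sigma>')"
  unfolding TS_def by blast

lemma fmap_val:
  assumes \<Phi>: "\<Phi> \<in> TS n la mu k k'" and B: "B \<in> Tmat la mu" and x: "(t, \<sigma>) \<in> wreath n"
  shows "fmap n la mu \<Phi> (B, (t, \<sigma>)) = chi (CP la mu B) (WT la mu B k k') t * \<Phi> (P \<sigma>, P (piB n la mu B \<circ> \<sigma>))"
proof -
  let ?\<pi> = "piB n la mu B"
  have p: "?\<pi> permutes {..<n}" by (rule piB(1)[OF la mu B])
  have w: "wmult (P ?\<pi>) (t, \<sigma>) \<in> wreath n" by (rule wmult_closed[OF P_in[OF p] x])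
  have "fmap n la mu \<Phi> (B, (t, \<sigma>)) = \<Phi> ((t, \<sigma>), (\<lambda>i. t (inv ?\<pi> i), ?\<pi> \<circ> \<sigma>))"
    unfolding fmap_def using B x by (simp add: wmult_P_left)
  also have "\<dots> = chi la k t * chi mu k' (\<lambda>i. t (inv ?\<pi> i)) * \<Phi> (P \<sigma>, P (?\<pi> \<circ> \<sigma>))"
    using TS_red[OF \<Phi> x w] by (simp add: wmult_P_left)
  also have "\<dots> = chi (CP la mu B) (WT la mu B k k') t * \<Phi> (P \<sigma>, P (?\<pi> \<circ> \<sigma>))"
    using chi_CP[OF la mu B, of t k k'] x by (simp add: wreath_iff)
  finally show ?thesis .
qed

lemma fmap_mem:
  assumes \<Phi>: "\<Phi> \<in> TS n la mu k k'"
  shows "fmap n la mu \<Phi> \<in> dsum_space la mu k k'"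
  unfolding dsum_space_def mem_Collect_eq
proof (intro conjI)
  show "\<forall>B x. B \<notin> Tmat la mu \<longrightarrow> fmap n la mu \<Phi> (B, x) = 0" by (simp add: fmap_def)
next
 show "\<forall>B\<in>Tmat la mu. (\<lambda>x. fmap n la mu \<Phi> (B, x)) \<in> Mperm (mat_comp (length la) (length mu) B) (mat_wts (length la) (length mu) B k k')"
 proof
  fix B assume B: "B \<in> Tmat la mu"
  let ?\<pi> = "piB n la mu B"
  have p: "?\<pi> permutes {..<n}" by (rule piB(1)[OF la mu B])
  define F where "F \<sigma> = \<Phi> (P \<sigma>, P (?\<pi> \<circ> \<sigma>))" for \<sigma>
  have e: "(\<lambda>x. fmap n la mu \<Phi> (B, x)) = (\<lambda>x. if x \<in> wreath n then chi (CP la mu B) (WT la mu B k k') (fst x) * F (snd x) else 0)"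
  proof
    fix x :: wgrp
    obtain t \<sigma> where x: "x = (t, \<sigma>)" by fastforce
    show "fmap n la mu \<Phi> (B, x) = (if x \<in> wreath n then chi (CP la mu B) (WT la mu B k k') (fst x) * F (snd x) else 0)"
      using fmap_val[OF \<Phi> B, of t \<sigma>] unfolding x F_def by (simp add: fmap_def)
  qed
  have "(\<lambda>x. if x \<in> wreath n then chi (CP la mu B) (WT la mu B k k') (fst x) * F (snd x) else 0) \<in> ind_space n (CP la mu B) (WT la mu B k k')"
  proof (rule ind_mem[OF sum_CP[OF B la(1)] pos_CP])
    fix \<kappa> \<sigma> assume k: "\<kappa> permutes {..<n}" "lp (CP la mu B) \<kappa>" and s: "\<sigma> permutes {..<n}"
    have l: "lp la \<kappa>" "lp mu (?\<pi> \<circ> \<kappa> \<circ> inv ?\<pi>)" using stab[OF la mu B k(1)] k(2) by auto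
    have "?\<pi> \<circ> (\<kappa> \<circ> \<sigma>) = (?\<pi> \<circ> \<kappa> \<circ> inv ?\<pi>) \<circ> (?\<pi> \<circ> \<sigma>)"
      using permutes_inverses(2)[OF p] by (simp add: fun_eq_iff)
    then have "F (\<kappa> \<circ> \<sigma>) = \<Phi> (P (\<kappa> \<circ> \<sigma>), P ((?\<pi> \<circ> \<kappa> \<circ> inv ?\<pi>) \<circ> (?\<pi> \<circ> \<sigma>)))" by (simp add: F_def)
    also have "\<dots> = \<Phi> (P \<sigma>, P (?\<pi> \<circ> \<sigma>))"
      by (rule TS_inv[OF \<Phi> k(1) l(1) _ l(2) s]) (use p k s in \<open>auto intro: permutes_compose permutes_inv\<close>)
    finally show "F (\<kappa> \<circ> \<sigma>) = F \<sigma>" by (simp add: F_def)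
  qed
  then show "(\<lambda>x. fmap n la mu \<Phi> (B, x)) \<in> Mperm (mat_comp (length la) (length mu) B) (mat_wts (length la) (length mu) B k k')"
    unfolding e Mperm_B[OF la mu B] .
 qed
qed

lemma gmap_mem:
  assumes \<Psi>: "\<Psi> \<in> dsum_space la mu k k'"
  shows "gmap n la mu k k' \<Psi> \<in> TS n la mu k k'"
  unfolding TS_def
proof (intro CollectI conjI allI impI ballI)
  fix x y assume "x \<notin> wreath n \<or> y \<notin> wreath n"
  then show "gmap n la mu k k' \<Psi> (x, y) = 0" by (auto simp: gmap_def)
next
  fix x y assume "x \<in> wreath n" "y \<in> wreath n"
  moreover have "P (snd x) \<in> wreath n" "P (snd y) \<in> wreath n"
    using \<open>x \<in> wreath n\<close> \<open>y \<in> wreath n\<close> by (auto simp: wreath_def)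
  ultimately show "gmap n la mu k k' \<Psi> (x, y) = chi la k (fst x) * chi mu k' (fst y) * gmap n la mu k k' \<Psi> (P (snd x), P (snd y))"
    by (simp add: gmap_def chi_one)
next
  fix \<kappa> \<kappa>' \<sigma> \<sigma>' assume h: "\<kappa> permutes {..<n} \<and> lp la \<kappa> \<and> \<kappa>' permutes {..<n} \<and> lp mu \<kappa>' \<and>
        \<sigma> permutes {..<n} \<and> \<sigma>' permutes {..<n}"
  then have "P (\<kappa> \<circ> \<sigma>) \<in> wreath n" "P (\<kappa>' \<circ> \<sigma>') \<in> wreath n" "P \<sigma> \<in> wreath n" "P \<sigma>' \<in> wreath n"
    by (auto intro!: P_in permutes_compose)
  then show "gmap n la mu k k' \<Psi> (P (\<kappa> \<circ> \<sigma>), P (\<kappa>' \<circ> \<sigma>')) = gmap n la mu k k' \<Psi> (P \<sigma>, P \<sigma>')"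
    using Fg_inv[OF la mu \<Psi>] h by (simp add: gmap_def chi_one)
qed

lemma fg:
  assumes \<Psi>: "\<Psi> \<in> dsum_space la mu k k'"
  shows "fmap n la mu (gmap n la mu k k' \<Psi>) = \<Psi>"
proof (intro ext, clarify)
  fix B t \<sigma>
  show "fmap n la mu (gmap n la mu k k' \<Psi>) (B, t, \<sigma>) = \<Psi> (B, t, \<sigma>)"
  proof (cases "B \<in> Tmat la mu \<and> (t, \<sigma>) \<in> wreath n")
    case False
    show ?thesis
    proof (cases "B \<in> Tmat la mu")
      case False
      then show ?thesis using dsum_zero[OF la mu \<Psi>] by (simp add: fmap_def)
    next
      case True
      with \<open>\<not> (B \<in> Tmat la mu \<and> (t, \<sigma>) \<in> wreath n)\<close> have "(t, \<sigma>) \<notin> wreath n" by simp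
      moreover have "\<Psi> (B, t, \<sigma>) = 0"
        using ind_zero[OF dsum_mem[OF la mu \<Psi> True]] \<open>(t, \<sigma>) \<notin> wreath n\<close> by simp
      ultimately show ?thesis by (simp add: fmap_def)
    qed
  next
    case True
    then have B: "B \<in> Tmat la mu" and x: "(t, \<sigma>) \<in> wreath n" by auto
    have s: "\<sigma> permutes {..<n}" using x by (simp add: wreath_iff)
    have g: "gmap n la mu k k' \<Psi> \<in> TS n la mu k k'" by (rule gmap_mem[OF \<Psi>])
    have "fmap n la mu (gmap n la mu k k' \<Psi>) (B, t, \<sigma>)
        = chi (CP la mu B) (WT la mu B k k') t * gmap n la mu k k' \<Psi> (P \<sigma>, P (piB n la mu B \<circ> \<sigma>))"
      by (rule fmap_val[OF g B x])
    also have "gmap n la mu k k' \<Psi> (P \<sigma>, P (piB n la mu B \<circ> \<sigma>)) = \<Psi> (B, P \<sigma>)"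
      using s piB(1)[OF la mu B] Fg_one[OF la mu \<Psi> B s]
      by (simp add: gmap_def chi_one P_in permutes_compose)
    also have "chi (CP la mu B) (WT la mu B k k') t * \<Psi> (B, P \<sigma>) = \<Psi> (B, t, \<sigma>)"
      using ind_red[OF dsum_mem[OF la mu \<Psi> B] sum_CP[OF B la(1)] pos_CP x] by simp
    finally show ?thesis .
  qed
qed

lemma gf:
  assumes \<Phi>: "\<Phi> \<in> TS n la mu k k'"
  shows "gmap n la mu k k' (fmap n la mu \<Phi>) = \<Phi>"
proof (intro ext, clarify)
  fix t \<sigma> t' \<sigma>'
  show "gmap n la mu k k' (fmap n la mu \<Phi>) ((t, \<sigma>), (t', \<sigma>')) = \<Phi> ((t, \<sigma>), (t', \<sigma>'))"
  proof (cases "(t, \<sigma>) \<in> wreath n \<and> (t', \<sigma>') \<in> wreath n")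
    case False
    then show ?thesis using TS_zero[OF \<Phi> False] unfolding gmap_def by auto
  next
    case True
    then have x: "(t, \<sigma>) \<in> wreath n" and y: "(t', \<sigma>') \<in> wreath n" by auto
    have s: "\<sigma> permutes {..<n}" "\<sigma>' permutes {..<n}" using x y by (auto simp: wreath_iff)
    obtain B \<alpha> \<beta> where B: "B \<in> Tmat la mu" and a: "\<alpha> permutes {..<n}" "lp la \<alpha>"
      and b: "\<beta> permutes {..<n}" "lp mu \<beta>" and eq: "\<sigma>' \<circ> inv \<sigma> = \<beta> \<circ> piB n la mu B \<circ> inv \<alpha>"
      using Fg_ex[OF la mu s] by blast
    let ?\<pi> = "piB n la mu B" and ?\<rho> = "inv \<alpha> \<circ> \<sigma>"
    have p: "?\<pi> permutes {..<n}" by (rule piB(1)[OF la mu B])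
    have r: "?\<rho> permutes {..<n}" using a s by (intro permutes_compose permutes_inv)
    have fm: "fmap n la mu \<Phi> \<in> dsum_space la mu k k'" by (rule fmap_mem[OF \<Phi>])
    have "Fg n la mu (fmap n la mu \<Phi>) \<sigma> \<sigma>' = fmap n la mu \<Phi> (B, P ?\<rho>)"
      by (rule Fg_eq[OF la mu fm B s(1) a b eq])
    also have "\<dots> = \<Phi> (P ?\<rho>, P (?\<pi> \<circ> ?\<rho>))"
      using fmap_val[OF \<Phi> B P_in[OF r]] by (simp add: chi_one)
    also have "\<dots> = \<Phi> (P (\<alpha> \<circ> ?\<rho>), P (\<beta> \<circ> (?\<pi> \<circ> ?\<rho>)))"
      by (rule TS_inv[OF \<Phi> a b r, symmetric]) (use p r in \<open>blast intro: permutes_compose\<close>)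
    also have "\<alpha> \<circ> ?\<rho> = \<sigma>" using permutes_inverses(1)[OF a(1)] by (simp add: fun_eq_iff)
    also have "\<beta> \<circ> (?\<pi> \<circ> ?\<rho>) = \<sigma>'"
    proof
      fix z
      have "\<beta> (?\<pi> (inv \<alpha> (\<sigma> z))) = \<sigma>' (inv \<sigma> (\<sigma> z))" using fun_cong[OF eq, of "\<sigma> z"] by simp
      then show "(\<beta> \<circ> (?\<pi> \<circ> ?\<rho>)) z = \<sigma>' z" using permutes_inverses(2)[OF s(1)] by simp
    qed
    finally have "Fg n la mu (fmap n la mu \<Phi>) \<sigma> \<sigma>' = \<Phi> (P \<sigma>, P \<sigma>')" .
    then show ?thesis using TS_red[OF \<Phi> x y] x y by (simp add: gmap_def)
  qed
qed

end


theorem lemma3p3: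
  fixes n :: nat and la mu :: "nat list" and k k' :: "int list"
  assumes "is_composition la n" and "is_composition mu n"
    and "length k = length la" and "length k' = length mu"
  shows "rep_iso n (tensor_space (Mperm la k) (Mperm mu k')) (tensor_act n)
                   (dsum_space la mu k k') (dsum_act n)"
proof -
  have la: "sum_list la = n" "pos la" and mu: "sum_list mu = n" "pos mu"
    using assms(1,2) by (auto simp: is_composition_def pos_def)
  have V: "tensor_space (Mperm la k) (Mperm mu k') = TS n la mu k k'"
    unfolding Mperm_def la(1) mu(1)
    using tensor_sub_TS[OF la mu] TS_sub_tensor[OF la mu] by blast
  let ?f = "fmap n la mu"
  have bij: "bij_betw ?f (TS n la mu k k') (dsum_space la mu k k')"
  proof (rule bij_betw_byWitness[where f'="gmap n la mu k k'"])
    show "\<forall>a\<in>TS n la mu k k'. gmap n la mu k k' (?f a) = a" using gf[OF la mu] by blast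
    show "\<forall>a'\<in>dsum_space la mu k k'. ?f (gmap n la mu k k' a') = a'" using fg[OF la mu] by blast
    show "?f ` TS n la mu k k' \<subseteq> dsum_space la mu k k'" using fmap_mem[OF la mu] by blast
    show "gmap n la mu k k' ` dsum_space la mu k k' \<subseteq> TS n la mu k k'" using gmap_mem[OF la mu] by blast
  qed
  have lin: "?f (\<lambda>x. a * u x + b * v x) = (\<lambda>y. a * ?f u y + b * ?f v y)" for a b u v
    by (auto simp: fmap_def fun_eq_iff)
  have int: "?f (tensor_act n g \<Phi>) = dsum_act n g (?f \<Phi>)" if g: "g \<in> wreath n" for g \<Phi>
  proof (intro ext, clarify)
    fix B t \<sigma>
    let ?\<pi> = "piB n la mu B"
    show "?f (tensor_act n g \<Phi>) (B, t, \<sigma>) = dsum_act n g (?f \<Phi>) (B, t, \<sigma>)"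
    proof (cases "B \<in> Tmat la mu \<and> (t, \<sigma>) \<in> wreath n")
      case False
      then show ?thesis
        by (auto simp: fmap_def dsum_act_def ind_act_def)
    next
      case True
      then have B: "B \<in> Tmat la mu" and x: "(t, \<sigma>) \<in> wreath n" by auto
      have p: "?\<pi> permutes {..<n}" by (rule piB(1)[OF la mu B])
      have px: "wmult (P ?\<pi>) (t, \<sigma>) \<in> wreath n" by (rule wmult_closed[OF P_in[OF p] x])
      have xg: "wmult (t, \<sigma>) g \<in> wreath n" by (rule wmult_closed[OF x g])
      obtain s \<tau> where gg: "g = (s, \<tau>)" by fastforce
      have bs: "bij \<sigma>" using x by (auto simp: wreath_iff intro: permutes_bij)
      have "wmult (wmult (P ?\<pi>) (t, \<sigma>)) g = wmult (P ?\<pi>) (wmult (t, \<sigma>) g)"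
        unfolding gg by (rule wmult_assoc[OF permutes_bij[OF p] bs])
      then show ?thesis using px xg x B
        by (simp add: fmap_def dsum_act_def ind_act_def tensor_act_def)
    qed
  qed
  show ?thesis
    unfolding rep_iso_def V
    using bij lin int by blast
qed


end
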